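(* Let $N\ge3$ and $m>2-\frac2N$. For every $M>0$ there exists a unique $\alpha=\alpha(M)>0$ such that the Lane–Emden solution $\psi$ with $\psi(0)=\alpha$ satisfies $$\omega_{N-1}\int_0^{R_*(\alpha)}\psi^{\frac{1}{m-1}}(s)\,s^{N-1}\,ds=M.$$
   Context: $\omega_{N-1}$ is the area of the unit sphere $S^{N-1}\subset\mathbb{R}^N$. For $\alpha>0$, $\psi$ denotes the unique solution of $\psi''+\frac{N-1}{r}\psi'=-\frac{m-1}{m}\psi^{1/(m-1)}$, $\psi(0)=\alpha$, $\psi'(0)=0$, positive and decreasing on $(0,R_*(\alpha))$, where $R_*(\alpha)\in(0,\infty)$ is the first zero of $\psi$ (the maximal radius on which the positive solution exists). *)

theory Defs
  imports "HOL-Analysis.Analysis"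
begin

definition sphere_area :: "nat \<Rightarrow> real" where
  "sphere_area N = 2 * pi powr (real N / 2) / Gamma (real N / 2)"

text \<open>psi is the Lane-Emden solution on [0,R] with psi(0)=alpha, psi'(0)=0,
  positive on [0,R) and with first zero R (so R = R_*(alpha)).\<close>
definition LE_solution :: "nat \<Rightarrow> real \<Rightarrow> real \<Rightarrow> real \<Rightarrow> (real \<Rightarrow> real) \<Rightarrow> bool" where
  "LE_solution N m \<alpha> R \<psi> \<longleftrightarrow>
     0 < R \<and> \<psi> 0 = \<alpha> \<and> continuous_on {0..R} \<psi> \<and>
     (\<psi> has_real_derivative 0) (at 0 within {0..R}) \<and>
     (\<exists>\<psi>'. \<forall>r\<in>{0<..<R}.
        (\<psi> has_real_derivative \<psi>' r) (at r) \<and>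
        (\<psi>' has_real_derivative
            (- ((m - 1) / m) * \<psi> r powr (1 / (m - 1)) - (real N - 1) / r * \<psi>' r)) (at r)) \<and>
     (\<forall>r\<in>{0..<R}. 0 < \<psi> r) \<and> \<psi> R = 0"

end

theory Submission
  imports Defs
begin


definition PS :: "nat \<Rightarrow> real \<Rightarrow> real \<Rightarrow> real \<Rightarrow> real \<Rightarrow> (real \<Rightarrow> real) \<Rightarrow> bool" where
  "PS N c p \<alpha> b \<psi> \<longleftrightarrow>
     0 < b \<and> \<psi> 0 = \<alpha> \<and> continuous_on {0..b} \<psi> \<and>
     (\<psi> has_real_derivative 0) (at 0 within {0..b}) \<and>
     (\<exists>\<psi>'. \<forall>r\<in>{0<..<b}.
        (\<psi> has_real_derivative \<psi>' r) (at r) \<and>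
        (\<psi>' has_real_derivative (- c * \<psi> r powr p - (real N - 1) / r * \<psi>' r)) (at r)) \<and>
     (\<forall>r\<in>{0..b}. 0 < \<psi> r)"

definition Gint :: "nat \<Rightarrow> real \<Rightarrow> (real \<Rightarrow> real) \<Rightarrow> real \<Rightarrow> real" where
  "Gint N p \<psi> r = integral {0..r} (\<lambda>t. t ^ (N - 1) * \<psi> t powr p)"

lemma int_bound:
  fixes f :: "real \<Rightarrow> real"
  assumes "continuous_on {0..r} f" "\<And>t. t \<in> {0..r} \<Longrightarrow> \<bar>f t\<bar> \<le> B" "0 \<le> r"
  shows "\<bar>integral {0..r} f\<bar> \<le> B * r"
proof -
  have "norm (integral {0..r} f) \<le> integral {0..r} (\<lambda>t. B)"
    by (rule integral_norm_bound_integral) (use assms integrable_continuous_interval in auto)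
  then show ?thesis using assms by (simp add: mult.commute)
qed

lemma abs_div_le:
  fixes x t e :: real
  assumes "0 < t" "\<bar>x / t\<bar> < e"
  shows "\<bar>x\<bar> \<le> e * t"
proof -
  have "\<bar>x\<bar> = \<bar>x / t\<bar> * t" using assms by (simp add: abs_divide)
  also have "\<dots> \<le> e * t" using assms by (intro mult_right_mono) auto
  finally show ?thesis .
qed

lemma PS_cont_g:
  fixes \<psi> :: "real \<Rightarrow> real" and p b :: real
  assumes "continuous_on {0..b} \<psi>" "\<forall>r\<in>{0..b}. 0 < \<psi> r"
  shows "continuous_on {0..b} (\<lambda>t. t ^ (N - 1) * \<psi> t powr p)"
proof -
  have "continuous_on {0..b} (\<lambda>x. \<psi> x powr p)"
    by (rule continuous_on_powr') (use assms in \<open>auto intro: continuous_on_const\<close>)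
  then show ?thesis by (rule continuous_on_mult[rotated]) (intro continuous_intros)
qed

lemma PS_deriv_formula:
  assumes ps: "PS N c p \<alpha> b \<psi>" and N: "2 \<le> N"
  shows "\<forall>r\<in>{0<..<b}. (\<psi> has_real_derivative (- c * Gint N p \<psi> r / r ^ (N - 1))) (at r)"
proof -
  from ps obtain \<psi>' where b: "0 < b" and a0: "\<psi> 0 = \<alpha>" and cont: "continuous_on {0..b} \<psi>"
    and d0: "(\<psi> has_real_derivative 0) (at 0 within {0..b})"
    and pos: "\<forall>r\<in>{0..b}. 0 < \<psi> r"
    and d: "\<And>r. r\<in>{0<..<b} \<Longrightarrow> (\<psi> has_real_derivative \<psi>' r) (at r) \<and>
        (\<psi>' has_real_derivative (- c * \<psi> r powr p - (real N - 1) / r * \<psi>' r)) (at r)"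
    unfolding PS_def by blast
  define g where "g t = t ^ (N - 1) * \<psi> t powr p" for t
  have gc: "continuous_on {0..b} g" unfolding g_def using PS_cont_g[OF cont pos] .
  define G where "G r = integral {0..r} g" for r
  have GG: "Gint N p \<psi> r = G r" for r unfolding Gint_def G_def g_def by simp
  have Gd: "(G has_real_derivative g r) (at r)" if "r \<in> {0<..<b}" for r
  proof -
    have "(G has_real_derivative g r) (at r within {0..b})"
      unfolding G_def using integral_has_real_derivative[OF gc, of r] that by auto
    moreover have "r \<in> interior {0..b}" using that by auto
    then have "at r within {0..b} = at r" by (rule at_within_interior)
    ultimately show ?thesis by simp
  qed
  define \<phi> where "\<phi> r = r ^ (N - 1) * \<psi>' r" for r
  have \<phi>d: "(\<phi> has_real_derivative (- c * g r)) (at r)" if r: "r \<in> {0<..<b}" for r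
  proof -
    from d[OF r] have d2: "(\<psi>' has_real_derivative (- c * \<psi> r powr p - (real N - 1) / r * \<psi>' r)) (at r)"
      by auto
    have "(\<phi> has_real_derivative (real (N - 1) * r ^ (N - 1 - 1) * \<psi>' r +
       r ^ (N - 1) * (- c * \<psi> r powr p - (real N - 1) / r * \<psi>' r))) (at r)"
      unfolding \<phi>_def by (auto intro!: derivative_eq_intros d2)
    moreover have "real (N - 1) * r ^ (N - 1 - 1) * \<psi>' r +
       r ^ (N - 1) * (- c * \<psi> r powr p - (real N - 1) / r * \<psi>' r) = - c * g r"
    proof -
      obtain k where kN: "N = Suc (Suc k)" using N by (metis add_2_eq_Suc le_Suc_ex)
      have e1: "r ^ (N - 1) = r * r ^ (N - 1 - 1)" using kN by simp
      have e2: "real N - 1 = real (N - 1)" using N by auto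
      show ?thesis unfolding g_def e2 using r kN by (simp add: field_simps)
    qed
    ultimately show ?thesis by simp
  qed
  define H where "H r = \<phi> r + c * G r" for r
  have Hd: "(H has_real_derivative 0) (at r)" if "r \<in> {0<..<b}" for r
  proof -
    have "(H has_real_derivative (- c * g r + c * g r)) (at r)"
      unfolding H_def by (auto intro!: derivative_eq_intros \<phi>d Gd that)
    then show ?thesis by simp
  qed
  define K where "K = H (b/2)"
  have HK: "H r = K" if "r \<in> {0<..<b}" for r
  proof -
    have *: "H x = H y" if "0 < y" "y < x" "x < b" for x y
    proof -
      have "continuous_on {y..x} H"
        using Hd that by (intro DERIV_continuous_on[where D = "\<lambda>_. 0"]) (auto intro: has_field_derivative_at_within)
      then show ?thesis
        using DERIV_isconst2[of y x H x] Hd that by auto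
    qed
    consider "r < b/2" | "r = b/2" | "b/2 < r" by linarith
    then show ?thesis
    proof cases
      case 1
      have "H (b/2) = H r" using 1 that b by (intro *) auto
      then show ?thesis unfolding K_def by simp
    next
      case 2 then show ?thesis unfolding K_def by (simp only:)
    next
      case 3
      have "H r = H (b/2)" using 3 that b by (intro *) auto
      then show ?thesis unfolding K_def by simp
    qed
  qed
  have K0: "K = 0"
  proof -
    have Kb: "\<bar>K\<bar> \<le> 4 * e" if e: "e > 0" for e
    proof -
      have "bounded (g ` {0..b})" by (intro compact_imp_bounded compact_continuous_image gc) auto
      then obtain B where B0: "\<forall>x\<in>g ` {0..b}. norm x \<le> B" by (auto simp: bounded_iff)
      have B: "\<bar>g t\<bar> \<le> B" if "t \<in> {0..b}" for t using B0 that by auto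
      have Bn: "0 \<le> B" using B[of 0] b by auto
      define d1 where "d1 = e / (\<bar>c\<bar> * B + 1)"
      have cpos: "c \<ge> 0 \<or> True" by simp
      from d0 have "((\<lambda>y. (\<psi> y - \<psi> 0) / (y - 0)) \<longlongrightarrow> 0) (at 0 within {0..b})"
        by (simp add: has_field_derivative_iff)
      then have "eventually (\<lambda>y. dist ((\<psi> y - \<psi> 0) / (y - 0)) 0 < e) (at 0 within {0..b})"
        using e by (rule tendstoD)
      then obtain d2 where d2: "d2 > 0" and
        hd2: "\<And>y. y \<in> {0..b} \<Longrightarrow> y \<noteq> 0 \<Longrightarrow> dist y 0 < d2 \<Longrightarrow> \<bar>(\<psi> y - \<psi> 0) / y\<bar> < e"
        unfolding eventually_at by auto
      have d1p: "d1 > 0" unfolding d1_def using e Bn by (auto intro!: divide_pos_pos add_nonneg_pos)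
      define t where "t = min (min d1 d2) (min b 1) / 2"
      have t: "0 < t" "t < d1" "t < d2" "t < b" "t < 1"
        unfolding t_def using d1p d2 b by auto
      have ct: "continuous_on {t/2..t} \<psi>" using cont by (rule continuous_on_subset) (use t in auto)
      obtain l z where z: "t/2 < z" "z < t" and dz: "DERIV \<psi> z :> l" and mv: "\<psi> t - \<psi> (t/2) = (t - t/2) * l"
        using MVT[of "t/2" t \<psi>] ct t d real_differentiable_def
        by (smt (verit, ccfv_SIG) greaterThanLessThan_iff field_sum_of_halves)
      have zr: "z \<in> {0<..<b}" using z t by auto
      have lz: "l = \<psi>' z" using d[OF zr] dz DERIV_unique by blast
      have h1: "\<bar>(\<psi> t - \<psi> 0) / t\<bar> < e" using hd2[of t] t by auto
      have h2: "\<bar>(\<psi> (t/2) - \<psi> 0) / (t/2)\<bar> < e" using hd2[of "t/2"] t by auto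
      have h1': "\<bar>\<psi> t - \<psi> 0\<bar> \<le> e * t" by (rule abs_div_le) (use h1 t in auto)
      have h2': "\<bar>\<psi> (t/2) - \<psi> 0\<bar> \<le> e * (t/2)" by (rule abs_div_le) (use h2 t in auto)
      have a1: "\<bar>\<psi> t - \<psi> (t/2)\<bar> \<le> e * t + e * (t/2)" using h1' h2' by (smt (verit))
      have e3: "\<psi> t - \<psi> (t/2) = (t/2) * l" using mv by simp
      have a2: "\<bar>\<psi> t - \<psi> (t/2)\<bar> = (t/2) * \<bar>l\<bar>" unfolding e3 abs_mult using t by simp
      have "(t/2) * \<bar>l\<bar> \<le> (t/2) * (3 * e)" using a1 a2 by (simp add: algebra_simps)
      then have labs: "\<bar>l\<bar> \<le> 3 * e" using t by (simp add: mult_le_cancel_left_pos)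
      have zp: "z ^ (N - 1) \<le> 1" using z t by (intro power_le_one) auto
      have "\<bar>\<phi> z\<bar> \<le> \<bar>l\<bar>" unfolding \<phi>_def lz[symmetric] abs_mult
        using zp z t by (intro mult_left_le_one_le) auto
      have Gz: "\<bar>G z\<bar> \<le> B * z" unfolding G_def
      proof (rule int_bound)
        show "continuous_on {0..z} g" using gc by (rule continuous_on_subset) (use z t in auto)
      qed (use B z t in auto)
      have "\<bar>c * G z\<bar> \<le> \<bar>c\<bar> * (B * d1)"
      proof -
        have "B * z \<le> B * d1" using z t Bn by (intro mult_left_mono) auto
        then show ?thesis unfolding abs_mult using Gz by (intro mult_left_mono) auto
      qed
      also have "\<bar>c\<bar> * (B * d1) \<le> e"
      proof -
        have den: "0 < \<bar>c\<bar> * B + 1" using Bn by (simp add: add_nonneg_pos)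
        have q: "\<bar>c\<bar> * B / (\<bar>c\<bar> * B + 1) \<le> 1" using den by (simp add: divide_le_eq_1)
        have "\<bar>c\<bar> * (B * d1) = e * (\<bar>c\<bar> * B / (\<bar>c\<bar> * B + 1))" unfolding d1_def by (simp add: ac_simps)
        also have "\<dots> \<le> e * 1" using q e by (intro mult_left_mono) auto
        finally show ?thesis by simp
      qed
      finally have "\<bar>c * G z\<bar> \<le> e" .
      moreover have "K = \<phi> z + c * G z" using HK[OF zr] unfolding H_def by simp
      ultimately show ?thesis using \<open>\<bar>\<phi> z\<bar> \<le> \<bar>l\<bar>\<close> labs by linarith
    qed
    show ?thesis
    proof (rule ccontr)
      assume "K \<noteq> 0"
      then have "\<bar>K\<bar> \<le> 4 * (\<bar>K\<bar> / 8)" by (intro Kb) auto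
      then show False using \<open>K \<noteq> 0\<close> by auto
    qed
  qed
  show ?thesis
  proof
    fix r assume r: "r \<in> {0<..<b}"
    have "\<phi> r = - c * G r" using HK[OF r] K0 unfolding H_def by simp
    then have "\<psi>' r = - c * G r / r ^ (N - 1)" using r unfolding \<phi>_def by (auto simp: field_simps)
    then show "(\<psi> has_real_derivative (- c * Gint N p \<psi> r / r ^ (N - 1))) (at r)"
      using d[OF r] GG by simp
  qed
qed



lemma int_pow:
  fixes r :: real
  assumes "0 \<le> r"
  shows "((\<lambda>t. t ^ k) has_integral r ^ Suc k / real (Suc k)) {0..r}"
proof -
  have "((\<lambda>t. t ^ Suc k / real (Suc k)) has_real_derivative t ^ k) (at t within {0..r})" for t
    using DERIV_cdivide[OF DERIV_pow[of "Suc k" t "{0..r}"], of "real (Suc k)"] by simp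
  then have "((\<lambda>t. t ^ k) has_integral (r ^ Suc k / real (Suc k) - 0 ^ Suc k / real (Suc k))) {0..r}"
    using assms by (intro fundamental_theorem_of_calculus) (auto simp: has_real_derivative_iff_has_vector_derivative)
  then show ?thesis by simp
qed

lemma PS_mono:
  assumes "PS N c p \<alpha> b \<psi>" "0 < b'" "b' \<le> b"
  shows "PS N c p \<alpha> b' \<psi>"
proof -
  from assms(1) obtain \<psi>' where b: "0 < b" and a0: "\<psi> 0 = \<alpha>" and cont: "continuous_on {0..b} \<psi>"
    and d0: "(\<psi> has_real_derivative 0) (at 0 within {0..b})"
    and pos: "\<forall>r\<in>{0..b}. 0 < \<psi> r"
    and d: "\<forall>r\<in>{0<..<b}. (\<psi> has_real_derivative \<psi>' r) (at r) \<and>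
        (\<psi>' has_real_derivative (- c * \<psi> r powr p - (real N - 1) / r * \<psi>' r)) (at r)"
    unfolding PS_def by blast
  have "continuous_on {0..b'} \<psi>" using cont by (rule continuous_on_subset) (use assms in auto)
  moreover have "(\<psi> has_real_derivative 0) (at 0 within {0..b'})"
    using d0 by (rule has_field_derivative_subset) (use assms in auto)
  moreover have "\<exists>\<psi>'. \<forall>r\<in>{0<..<b'}. (\<psi> has_real_derivative \<psi>' r) (at r) \<and>
        (\<psi>' has_real_derivative (- c * \<psi> r powr p - (real N - 1) / r * \<psi>' r)) (at r)"
    using d assms by (intro exI[of _ \<psi>']) auto
  ultimately show ?thesis unfolding PS_def using assms a0 pos by auto
qed

lemma PS_cong:
  assumes "PS N c p \<alpha> b \<psi>" "\<forall>x\<in>{0..b}. \<phi> x = \<psi> x"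
  shows "PS N c p \<alpha> b \<phi>"
proof -
  from assms(1) obtain \<psi>' where b: "0 < b" and a0: "\<psi> 0 = \<alpha>" and cont: "continuous_on {0..b} \<psi>"
    and d0: "(\<psi> has_real_derivative 0) (at 0 within {0..b})"
    and pos: "\<forall>r\<in>{0..b}. 0 < \<psi> r"
    and d: "\<forall>r\<in>{0<..<b}. (\<psi> has_real_derivative \<psi>' r) (at r) \<and>
        (\<psi>' has_real_derivative (- c * \<psi> r powr p - (real N - 1) / r * \<psi>' r)) (at r)"
    unfolding PS_def by blast
  have e: "x \<in> {0..b} \<Longrightarrow> \<phi> x = \<psi> x" for x using assms(2) by auto
  have "continuous_on {0..b} \<phi>" using cont e continuous_on_cong by blast
  moreover have "(\<phi> has_real_derivative 0) (at 0 within {0..b})"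
    by (rule has_field_derivative_transform_within[OF d0, of 1]) (use b e in auto)
  moreover have "\<forall>r\<in>{0<..<b}. (\<phi> has_real_derivative \<psi>' r) (at r) \<and>
        (\<psi>' has_real_derivative (- c * \<phi> r powr p - (real N - 1) / r * \<psi>' r)) (at r)"
  proof
    fix r assume r: "r \<in> {0<..<b}"
    have "(\<phi> has_real_derivative \<psi>' r) (at r)"
      by (rule has_field_derivative_transform_within_open[where S = "{0<..<b}"]) (use d r e in auto)
    then show "(\<phi> has_real_derivative \<psi>' r) (at r) \<and>
        (\<psi>' has_real_derivative (- c * \<phi> r powr p - (real N - 1) / r * \<psi>' r)) (at r)"
      using d r e[of r] by auto
  qed
  ultimately show ?thesis unfolding PS_def using b a0 e pos by auto
qed

lemma PS_G_cont:
  assumes "PS N c p \<alpha> b \<psi>" "r \<in> {0..b}"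
  shows "continuous_on {0..r} (\<lambda>t. t ^ (N - 1) * \<psi> t powr p)"
proof -
  have "continuous_on {0..b} (\<lambda>t. t ^ (N - 1) * \<psi> t powr p)"
    using assms(1) unfolding PS_def by (intro PS_cont_g) auto
  then show ?thesis by (rule continuous_on_subset) (use assms in auto)
qed

lemma PS_G_nonneg:
  assumes "PS N c p \<alpha> b \<psi>" "r \<in> {0..b}"
  shows "0 \<le> Gint N p \<psi> r"
  unfolding Gint_def
  by (rule integral_nonneg) (use integrable_continuous_interval[OF PS_G_cont[OF assms]] in auto)

lemma PS_decr:
  assumes ps: "PS N c p \<alpha> b \<psi>" and c: "0 \<le> c" and N: "2 \<le> N" and xy: "0 \<le> x" "x \<le> y" "y \<le> b"
  shows "\<psi> y \<le> \<psi> x"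
proof (rule DERIV_nonpos_imp_decreasing_open[OF xy(2)])
  have "continuous_on {0..b} \<psi>" using ps unfolding PS_def by auto
  then show "continuous_on {x..y} \<psi>" by (rule continuous_on_subset) (use xy in auto)
  fix r assume r: "x < r" "r < y"
  then have rr: "r \<in> {0<..<b}" using xy by auto
  show "\<exists>d. (\<psi> has_real_derivative d) (at r) \<and> d \<le> 0"
  proof (intro exI conjI)
    show "(\<psi> has_real_derivative (- c * Gint N p \<psi> r / r ^ (N - 1))) (at r)"
      using PS_deriv_formula[OF ps N] rr by auto
    have "0 \<le> Gint N p \<psi> r" using PS_G_nonneg[OF ps] rr by auto
    then show "- c * Gint N p \<psi> r / r ^ (N - 1) \<le> 0" using c rr
      by (intro divide_nonpos_pos) (auto simp: mult_nonneg_nonneg)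
  qed
qed

lemma PS_le_alpha:
  assumes ps: "PS N c p \<alpha> b \<psi>" and c: "0 \<le> c" and N: "2 \<le> N" and r: "r \<in> {0..b}"
  shows "\<psi> r \<le> \<alpha>"
  using PS_decr[OF ps c N, of 0 r] r ps unfolding PS_def by auto

lemma PS_Glow:
  assumes ps: "PS N c p \<alpha> b \<psi>" and c: "0 \<le> c" and N: "2 \<le> N" and p: "0 \<le> p" and r: "r \<in> {0..b}"
  shows "\<psi> r powr p * r ^ N / real N \<le> Gint N p \<psi> r"
proof -
  have Nk: "Suc (N - 1) = N" using N by auto
  have hi: "((\<lambda>t. \<psi> r powr p * t ^ (N - 1)) has_integral \<psi> r powr p * (r ^ N / real N)) {0..r}"
    using has_integral_mult_right[OF int_pow[of r "N - 1"]] r Nk by auto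
  have "\<psi> r powr p * (r ^ N / real N) \<le> Gint N p \<psi> r"
    unfolding Gint_def
  proof (rule has_integral_le[OF hi])
    show "((\<lambda>t. t ^ (N - 1) * \<psi> t powr p) has_integral integral {0..r} (\<lambda>t. t ^ (N - 1) * \<psi> t powr p)) {0..r}"
      using integrable_continuous_interval[OF PS_G_cont[OF ps r]] by auto
    fix t assume t: "t \<in> {0..r}"
    have "\<psi> r \<le> \<psi> t" using PS_decr[OF ps c N, of t r] t r by auto
    moreover have "0 < \<psi> r" using ps r unfolding PS_def by auto
    ultimately have "\<psi> r powr p \<le> \<psi> t powr p" using p by (intro powr_mono2) auto
    then show "\<psi> r powr p * t ^ (N - 1) \<le> t ^ (N - 1) * \<psi> t powr p"
      using t by (simp add: mult.commute mult_right_mono)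
  qed
  then show ?thesis by simp
qed



lemma powr_lip:
  fixes x y d A p :: real
  assumes "0 < d" "d \<le> x" "x \<le> A" "d \<le> y" "y \<le> A" "0 < p"
  shows "\<bar>x powr p - y powr p\<bar> \<le> p * (d powr (p - 1) + A powr (p - 1)) * \<bar>x - y\<bar>"
proof -
  have bnd: "z powr (p - 1) \<le> d powr (p - 1) + A powr (p - 1)" if "d \<le> z" "z \<le> A" for z
  proof (cases "0 \<le> p - 1")
    case True
    then have "z powr (p - 1) \<le> A powr (p - 1)" using that assms by (intro powr_mono2) auto
    then show ?thesis by (smt (verit) powr_ge_zero)
  next
    case False
    then have "z powr (p - 1) \<le> d powr (p - 1)" using that assms by (intro powr_mono2') auto
    then show ?thesis by (smt (verit) powr_ge_zero)
  qed
  have main: "\<bar>u powr p - v powr p\<bar> \<le> p * (d powr (p - 1) + A powr (p - 1)) * \<bar>u - v\<bar>"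
    if uv: "d \<le> v" "v < u" "u \<le> A" for u v
  proof -
    obtain z where z: "v < z" "z < u" and eq: "u powr p - v powr p = (u - v) * (p * z powr (p - 1))"
      using MVT2[of v u "\<lambda>z. z powr p" "\<lambda>z. p * z powr (p - 1)"] uv assms
      by (metis has_real_derivative_powr less_le_trans order.strict_trans1)
    have "\<bar>u powr p - v powr p\<bar> = (u - v) * (p * z powr (p - 1))"
      using eq uv assms by (simp add: abs_of_nonneg)
    also have "\<dots> \<le> (u - v) * (p * (d powr (p - 1) + A powr (p - 1)))"
      using bnd[of z] z uv assms by (intro mult_left_mono) auto
    finally show ?thesis using uv by (simp add: ac_simps)
  qed
  consider "x = y" | "y < x" | "x < y" by linarith
  then show ?thesis
  proof cases
    case 1 then show ?thesis by simp
  next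
    case 2 then show ?thesis using main[of y x] assms by auto
  next
    case 3 then show ?thesis using main[of x y] assms by (auto simp: abs_minus_commute)
  qed
qed



lemma PS_unique:
  assumes ps1: "PS N c p \<alpha> b \<psi>1" and ps2: "PS N c p \<alpha> b \<psi>2"
    and c: "0 < c" and N: "2 \<le> N" and p: "0 < p"
  shows "\<forall>r\<in>{0..b}. \<psi>1 r = \<psi>2 r"
proof -
  have b: "0 < b" and cont1: "continuous_on {0..b} \<psi>1" and cont2: "continuous_on {0..b} \<psi>2"
    and pos1: "\<forall>r\<in>{0..b}. 0 < \<psi>1 r" and pos2: "\<forall>r\<in>{0..b}. 0 < \<psi>2 r"
    and a1: "\<psi>1 0 = \<alpha>" and a2: "\<psi>2 0 = \<alpha>"
    using ps1 ps2 unfolding PS_def by auto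
  obtain x1 where x1: "x1 \<in> {0..b}" "\<forall>y\<in>{0..b}. \<psi>1 x1 \<le> \<psi>1 y"
    using continuous_attains_inf[OF compact_Icc _ cont1] b by auto
  obtain x2 where x2: "x2 \<in> {0..b}" "\<forall>y\<in>{0..b}. \<psi>2 x2 \<le> \<psi>2 y"
    using continuous_attains_inf[OF compact_Icc _ cont2] b by auto
  define d where "d = min (\<psi>1 x1) (\<psi>2 x2)"
  have d: "0 < d" unfolding d_def using x1 x2 pos1 pos2 by auto
  have d1: "d \<le> \<psi>1 r" "d \<le> \<psi>2 r" if "r \<in> {0..b}" for r
    unfolding d_def using x1 x2 that by force+
  have u1: "\<psi>1 r \<le> \<alpha>" "\<psi>2 r \<le> \<alpha>" if "r \<in> {0..b}" for r
    using PS_le_alpha[OF ps1 _ N that] PS_le_alpha[OF ps2 _ N that] c by auto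
  define L where "L = p * (d powr (p - 1) + \<alpha> powr (p - 1))"
  have L0: "0 \<le> L" unfolding L_def using p by auto
  have lip: "\<bar>\<psi>1 r powr p - \<psi>2 r powr p\<bar> \<le> L * \<bar>\<psi>1 r - \<psi>2 r\<bar>" if "r \<in> {0..b}" for r
    unfolding L_def by (rule powr_lip) (use d d1[OF that] u1[OF that] p in auto)
  define w where "w r = \<psi>1 r - \<psi>2 r" for r
  define D where "D \<psi> r = - c * Gint N p \<psi> r / r ^ (N - 1)" for \<psi> r
  have D1: "(\<psi>1 has_real_derivative D \<psi>1 r) (at r)" if "r \<in> {0<..<b}" for r
    using PS_deriv_formula[OF ps1 N] that unfolding D_def by auto
  have D2: "(\<psi>2 has_real_derivative D \<psi>2 r) (at r)" if "r \<in> {0<..<b}" for r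
    using PS_deriv_formula[OF ps2 N] that unfolding D_def by auto
  have wd: "(w has_real_derivative (D \<psi>1 r - D \<psi>2 r)) (at r)" if "r \<in> {0<..<b}" for r
    unfolding w_def using D1[OF that] D2[OF that] by (rule DERIV_diff)
  have wc: "continuous_on {0..b} w" unfolding w_def using cont1 cont2 by (intro continuous_intros)
  define h where "h = min 1 (1 / (2 * (c * L + 1)))"
  have h: "0 < h" "h \<le> 1" unfolding h_def using c L0 by (auto simp: add_nonneg_pos)
  have hL: "c * L * h * h \<le> 1 / 2"
  proof -
    have cl: "0 \<le> c * L" using c L0 by auto
    have "c * L * h \<le> c * L * (1 / (2 * (c * L + 1)))" unfolding h_def using cl by (intro mult_left_mono) auto
    also have "\<dots> \<le> 1 / 2" using cl by (simp add: field_simps)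
    finally have "c * L * h \<le> 1 / 2" .
    moreover have "c * L * h * h \<le> c * L * h" using h cl by (intro mult_right_le_one_le) auto
    ultimately show ?thesis by linarith
  qed
  have step: "\<forall>r\<in>{0..min (real (Suc k) * h) b}. w r = 0"
    if IH: "\<forall>r\<in>{0..min (real k * h) b}. w r = 0" for k
  proof -
    define a where "a = min (real k * h) b"
    define b' where "b' = min (real (Suc k) * h) b"
    have a0: "0 \<le> a" "a \<le> b'" "b' \<le> b" "b' - a \<le> h" "0 \<le> b'"
      unfolding a_def b'_def using h b by (auto simp: algebra_simps min_def)
    have IHa: "w r = 0" if "r \<in> {0..a}" for r using IH that unfolding a_def by auto
    have wcb: "continuous_on {0..b'} (\<lambda>r. \<bar>w r\<bar>)"
      using wc by (intro continuous_intros) (rule continuous_on_subset, use a0 in auto)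
    obtain x0 where x0: "x0 \<in> {0..b'}" "\<forall>y\<in>{0..b'}. \<bar>w y\<bar> \<le> \<bar>w x0\<bar>"
      using continuous_attains_sup[OF compact_Icc _ wcb] a0 by auto
    define W where "W = \<bar>w x0\<bar>"
    have W: "\<bar>w y\<bar> \<le> W" if "y \<in> {0..b'}" for y using x0 that unfolding W_def by auto
    have W0: "0 \<le> W" unfolding W_def by simp
    have half: "\<bar>w r\<bar> \<le> W / 2" if r: "r \<in> {0..b'}" for r
    proof (cases "r \<le> a")
      case True then show ?thesis using IHa[of r] r W0 by auto
    next
      case False
      then have ar: "a < r" by simp
      have cw: "continuous_on {a..r} w" using wc by (rule continuous_on_subset) (use a0 r in auto)
      obtain l \<xi> where \<xi>: "a < \<xi>" "\<xi> < r" and dxi: "DERIV w \<xi> :> l" and mv: "w r - w a = (r - a) * l"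
        using MVT[OF ar cw] wd a0 r real_differentiable_def
        by (smt (verit, best) atLeastAtMost_iff greaterThanLessThan_iff)
      have \<xi>b: "\<xi> \<in> {0<..<b}" using \<xi> a0 r by auto
      have l: "l = D \<psi>1 \<xi> - D \<psi>2 \<xi>" using wd[OF \<xi>b] dxi DERIV_unique by blast
      define F where "F t = t ^ (N - 1) * \<psi>1 t powr p - t ^ (N - 1) * \<psi>2 t powr p" for t
      have Fc: "continuous_on {0..\<xi>} F" unfolding F_def
        by (rule continuous_on_diff) (use PS_G_cont[OF ps1, of \<xi>] PS_G_cont[OF ps2, of \<xi>] \<xi>b in auto)
      have Gdiff: "Gint N p \<psi>1 \<xi> - Gint N p \<psi>2 \<xi> = integral {0..\<xi>} F"
        unfolding Gint_def F_def
        by (rule integral_diff[symmetric]) (use PS_G_cont[OF ps1, of \<xi>] PS_G_cont[OF ps2, of \<xi>] \<xi>b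
            integrable_continuous_interval in auto)
      have split: "integral {0..a} F + integral {a..\<xi>} F = integral {0..\<xi>} F"
        using Henstock_Kurzweil_Integration.integral_combine[where a=0 and c=a and b="\<xi>" and f=F] a0 \<xi> integrable_continuous_interval[OF Fc] by auto
      have z: "integral {0..a} F = 0"
      proof -
        have "integral {0..a} F = integral {0..a} (\<lambda>t. 0)"
          by (rule integral_cong) (use IHa in \<open>auto simp: F_def w_def\<close>)
        then show ?thesis by simp
      qed
      have Fb: "\<bar>F t\<bar> \<le> \<xi> ^ (N - 1) * (L * W)" if t: "t \<in> {a..\<xi>}" for t
      proof -
        have tb: "t \<in> {0..b}" "t \<in> {0..b'}" using t a0 \<xi> r by auto
        have "\<bar>F t\<bar> = t ^ (N - 1) * \<bar>\<psi>1 t powr p - \<psi>2 t powr p\<bar>"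
          unfolding F_def using tb by (simp add: abs_mult right_diff_distrib[symmetric])
        also have "\<dots> \<le> \<xi> ^ (N - 1) * (L * W)"
        proof (rule mult_mono)
          show "t ^ (N - 1) \<le> \<xi> ^ (N - 1)" using t tb by (intro power_mono) auto
          have "\<bar>\<psi>1 t powr p - \<psi>2 t powr p\<bar> \<le> L * \<bar>w t\<bar>" using lip[OF tb(1)] unfolding w_def .
          also have "\<dots> \<le> L * W" using W[OF tb(2)] L0 by (intro mult_left_mono) auto
          finally show "\<bar>\<psi>1 t powr p - \<psi>2 t powr p\<bar> \<le> L * W" .
        qed (use \<xi> a0 in auto)
        finally show ?thesis .
      qed
      have Fc2: "continuous_on {a..\<xi>} F" using Fc by (rule continuous_on_subset) (use a0 in auto)
      have "norm (integral {a..\<xi>} F) \<le> integral {a..\<xi>} (\<lambda>t. \<xi> ^ (N - 1) * (L * W))"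
        by (rule integral_norm_bound_integral) (use Fb integrable_continuous_interval[OF Fc2] in auto)
      moreover have "integral {a..\<xi>} (\<lambda>t. \<xi> ^ (N - 1) * (L * W)) = (\<xi> - a) * (\<xi> ^ (N - 1) * (L * W))"
        using \<xi> by simp
      moreover have "integral {0..\<xi>} F = integral {a..\<xi>} F" using split z by simp
      ultimately have Ib: "\<bar>integral {0..\<xi>} F\<bar> \<le> (\<xi> - a) * (\<xi> ^ (N - 1) * (L * W))"
        by (metis real_norm_def)
      have xp: "0 < \<xi> ^ (N - 1)" using \<xi>b by auto
      have "l = - c * (Gint N p \<psi>1 \<xi> - Gint N p \<psi>2 \<xi>) / \<xi> ^ (N - 1)"
        unfolding l D_def by (simp add: diff_divide_distrib right_diff_distrib)
      then have "\<bar>l\<bar> = c * \<bar>Gint N p \<psi>1 \<xi> - Gint N p \<psi>2 \<xi>\<bar> / \<xi> ^ (N - 1)"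
        using c xp by (simp add: abs_divide abs_mult)
      also have "\<dots> = c * \<bar>integral {0..\<xi>} F\<bar> / \<xi> ^ (N - 1)" using Gdiff by simp
      also have "\<dots> \<le> c * ((\<xi> - a) * (\<xi> ^ (N - 1) * (L * W))) / \<xi> ^ (N - 1)"
        using Ib c xp by (intro divide_right_mono mult_left_mono) auto
      also have "\<dots> = c * L * W * (\<xi> - a)"
      proof -
        have eq: "c * ((\<xi> - a) * (\<xi> ^ (N - 1) * (L * W))) = (c * L * W * (\<xi> - a)) * \<xi> ^ (N - 1)"
          by (simp add: algebra_simps)
        have X: "\<xi> ^ (N - 1) \<noteq> 0" by (metis xp less_irrefl)
        show ?thesis unfolding eq by (rule nonzero_mult_div_cancel_right[OF X])
      qed
      also have "\<dots> \<le> c * L * W * h" using \<xi> a0 r c L0 W0 by (intro mult_left_mono) auto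
      finally have lb: "\<bar>l\<bar> \<le> c * L * W * h" .
      have "\<bar>w r\<bar> = (r - a) * \<bar>l\<bar>" using mv IHa[of a] a0 ar by (simp add: abs_mult)
      also have "\<dots> \<le> h * (c * L * W * h)" using lb a0 r ar by (intro mult_mono) auto
      also have "\<dots> = (c * L * h * h) * W" by (simp add: ac_simps)
      also have "\<dots> \<le> (1/2) * W" using hL W0 by (intro mult_right_mono) auto
      finally show ?thesis by simp
    qed
    have "W \<le> W / 2" using half[OF x0(1)] unfolding W_def by simp
    then have "W = 0" using W0 by simp
    then show ?thesis using W unfolding b'_def by auto
  qed
  have all: "\<forall>r\<in>{0..min (real k * h) b}. w r = 0" for k
  proof (induction k)
    case 0
    then show ?case using a1 a2 b unfolding w_def by auto
  next
    case (Suc k) then show ?case using step by blast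
  qed
  obtain k where k: "b / h < real k" using reals_Archimedean2 by blast
  then have "b \<le> real k * h" using h by (simp add: field_simps)
  then have "min (real k * h) b = b" by simp
  then show ?thesis using all[of k] unfolding w_def by auto
qed



lemma PS_global_False:
  assumes N: "3 \<le> N" and c: "0 < c" and p: "0 < p" and pN: "p < real N / (real N - 2)"
    and al: "0 < \<alpha>" and ps: "\<And>b. 0 < b \<Longrightarrow> PS N c p \<alpha> b \<psi>"
  shows False
proof -
  have N2: "2 \<le> N" using N by auto
  define D where "D r = - c * Gint N p \<psi> r / r ^ (N - 1)" for r
  have der: "(\<psi> has_real_derivative D r) (at r)" if "0 < r" for r
    using PS_deriv_formula[OF ps[of "r+1"] N2] that unfolding D_def by auto
  have pos: "0 < \<psi> r" if "0 \<le> r" for r using ps[of "r+1"] that unfolding PS_def by auto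
  have le\<alpha>: "\<psi> r \<le> \<alpha>" if "0 \<le> r" for r using PS_le_alpha[OF ps[of "r+1"] _ N2, of r] c that by auto
  have Glow: "\<psi> r powr p * r ^ N / real N \<le> Gint N p \<psi> r" if "0 \<le> r" for r
    using PS_Glow[OF ps[of "r+1"] _ N2, of r] c p that by auto
  have cont: "continuous_on {0..r} \<psi>" if "0 \<le> r" for r
    using ps[of "r+1"] that unfolding PS_def by (auto intro: continuous_on_subset)
  have Gmono: "Gint N p \<psi> 1 \<le> Gint N p \<psi> r" if r: "1 \<le> r" for r
  proof -
    define g where "g t = t ^ (N - 1) * \<psi> t powr p" for t
    have gc: "continuous_on {0..r} g" unfolding g_def using PS_G_cont[OF ps[of r], of r] r by auto
    have "integral {0..1} g + integral {1..r} g = integral {0..r} g"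
      using Henstock_Kurzweil_Integration.integral_combine[where a=0 and c=1 and b=r and f=g]
        r integrable_continuous_interval[OF gc] by auto
    moreover have "0 \<le> integral {1..r} g"
    proof (rule integral_nonneg)
      show "g integrable_on {1..r}"
        using integrable_continuous_interval[of 1 r g] gc continuous_on_subset[of "{0..r}" g "{1..r}"] by auto
    qed (auto simp: g_def)
    ultimately show ?thesis unfolding Gint_def g_def by linarith
  qed
  define g1 where "g1 = Gint N p \<psi> 1"
  have g1: "0 < g1"
  proof -
    have "0 < \<psi> 1 powr p * 1 ^ N / real N" using pos[of 1] N by auto
    then show ?thesis using Glow[of 1] unfolding g1_def by auto
  qed
  define k where "k = real N - 2"
  have k: "1 \<le> k" unfolding k_def using N by auto
  have kN: "k + 1 = real (N - 1)" unfolding k_def using N by auto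
  define a where "a = c * g1 / k"
  have a: "0 < a" unfolding a_def using c g1 k by auto
  have pw: "x powr (- k - 1) = 1 / x ^ (N - 1)" if "0 < x" for x
  proof -
    have "x powr (- k - 1) = inverse (x powr (k + 1))" by (simp add: powr_minus[symmetric])
    also have "\<dots> = inverse (x ^ (N - 1))" unfolding kN using that by (simp add: powr_realpow)
    finally show ?thesis by (simp add: inverse_eq_divide)
  qed
  have lower: "a * r powr (- k) \<le> \<psi> r" if r: "1 \<le> r" for r
  proof (rule ccontr)
    assume neg: "\<not> a * r powr (- k) \<le> \<psi> r"
    define d where "d = a * r powr (- k) - \<psi> r"
    have d: "0 < d" using neg unfolding d_def by auto
    define h where "h x = \<psi> x - a * x powr (- k)" for x
    have hd: "(h has_real_derivative (D x - a * (- k * x powr (- k - 1)))) (at x)" if "0 < x" for x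
      unfolding h_def using der[OF that] has_real_derivative_powr[OF that, of "- k"] that
      by (auto intro!: derivative_eq_intros)
    have hdec: "h t \<le> h r" if t: "r \<le> t" for t
    proof (rule DERIV_nonpos_imp_decreasing_open[OF t])
      show "continuous_on {r..t} h"
      proof (rule DERIV_atLeastAtMost_imp_continuous_on)
        fix x assume "r \<le> x" "x \<le> t"
        then have "0 < x" using r by auto
        then show "\<exists>y. (h has_real_derivative y) (at x)" using hd by blast
      qed
      fix x assume x: "r < x" "x < t"
      have x0: "0 < x" using x r by auto
      show "\<exists>y. (h has_real_derivative y) (at x) \<and> y \<le> 0"
      proof (intro exI conjI)
        show "(h has_real_derivative (D x - a * (- k * x powr (- k - 1)))) (at x)" using hd[OF x0] .
        have "a * k * x powr (- k - 1) = c * g1 / x ^ (N - 1)"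
          unfolding pw[OF x0] a_def using k by simp
        also have "\<dots> \<le> c * Gint N p \<psi> x / x ^ (N - 1)"
          using Gmono[of x] x r c x0 unfolding g1_def by (intro divide_right_mono mult_left_mono) auto
        finally show "D x - a * (- k * x powr (- k - 1)) \<le> 0" unfolding D_def by (simp add: algebra_simps)
      qed
    qed
    have "((\<lambda>t. a * t powr (- k)) \<longlongrightarrow> a * 0) at_top"
      using k by (intro tendsto_mult tendsto_const tendsto_neg_powr filterlim_ident) auto
    then have "eventually (\<lambda>t. a * t powr (- k) < d) at_top"
      using d by (intro order_tendstoD(2)) auto
    then obtain T where T: "\<And>t. T \<le> t \<Longrightarrow> a * t powr (- k) < d"
      unfolding eventually_at_top_linorder by auto
    define t where "t = max T r"
    have "h t \<le> h r" using hdec[of t] unfolding t_def by auto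
    moreover have "a * t powr (- k) < d" using T[of t] unfolding t_def by auto
    moreover have "0 < \<psi> t" using pos[of t] r unfolding t_def by auto
    ultimately show False unfolding h_def d_def by linarith
  qed
  define Q where "Q = real N / (real N - 2)"
  have Nq: "1 < Q" unfolding Q_def using N by (simp add: field_simps)
  have pQ: "p < Q" unfolding Q_def using pN .
  define s where "s = (max p 1 + Q) / 2"
  have s1: "1 < s" "p < s" "s < Q" unfolding s_def max_def using pQ Nq by auto
  have s1': "s < real N / (real N - 2)" using s1(3) unfolding Q_def .
  have ks: "k * (s - 1) < 2"
  proof -
    have "s - 1 < real N / (real N - 2) - 1" using s1' by auto
    also have "\<dots> = 2 / k" unfolding k_def using N by (simp add: field_simps)
    finally show ?thesis using k by (simp add: field_simps)
  qed
  define k2 where "k2 = (s - 1) * c / real N * \<alpha> powr (p - s) / 2"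
  have k2: "0 < k2" unfolding k2_def using s1 c al N by auto
  define z where "z r = \<psi> r powr (1 - s)" for r
  have zlow: "k2 * r ^ 2 \<le> z r" if r: "0 < r" for r
  proof -
    have "(\<lambda>x. z x - k2 * x ^ 2) 0 \<le> (\<lambda>x. z x - k2 * x ^ 2) r"
    proof (rule DERIV_nonneg_imp_increasing_open[of 0 r "\<lambda>x. z x - k2 * x ^ 2"])
      show "0 \<le> r" using r by simp
      have "continuous_on {0..r} (\<lambda>x. \<psi> x powr (1 - s))"
      proof (rule continuous_on_powr')
        have "\<forall>x\<in>{0..r}. 0 < \<psi> x" using pos by auto
        then show "\<forall>x\<in>{0..r}. 0 \<le> \<psi> x \<and> (\<psi> x = 0 \<longrightarrow> 0 < 1 - s)" by auto
      qed (use cont[of r] r in \<open>auto intro: continuous_on_const\<close>)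
      then show "continuous_on {0..r} (\<lambda>x. z x - k2 * x ^ 2)" unfolding z_def
        by (rule continuous_on_diff) (intro continuous_intros)
      fix x assume x: "0 < x" "x < r"
      have px: "0 < \<psi> x" using pos[of x] x by auto
      have zd: "(z has_real_derivative ((1 - s) * \<psi> x powr (1 - s - 1) * D x)) (at x)"
        unfolding z_def using DERIV_chain2[OF has_real_derivative_powr[OF px, of "1 - s"] der[OF x(1)]] by simp
      show "\<exists>y. ((\<lambda>x. z x - k2 * x ^ 2) has_real_derivative y) (at x) \<and> 0 \<le> y"
      proof (intro exI conjI)
        show "((\<lambda>x. z x - k2 * x ^ 2) has_real_derivative ((1 - s) * \<psi> x powr (1 - s - 1) * D x - k2 * (2 * x))) (at x)"
          using zd by (auto intro!: derivative_eq_intros)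
        have G: "\<psi> x powr p * x ^ N / real N \<le> Gint N p \<psi> x" using Glow[of x] x by auto
        have xN: "x ^ N / x ^ (N - 1) = x" using x N by (simp add: power_diff)
        have "(1 - s) * \<psi> x powr (1 - s - 1) * D x = (s - 1) * c * \<psi> x powr (- s) * (Gint N p \<psi> x / x ^ (N - 1))"
          using x unfolding D_def by (simp add: field_simps)
        also have "\<dots> \<ge> (s - 1) * c * \<psi> x powr (- s) * (\<psi> x powr p * x ^ N / real N / x ^ (N - 1))"
          using G x s1 c by (intro mult_left_mono divide_right_mono) auto
        finally have A: "(s - 1) * c * \<psi> x powr (- s) * (\<psi> x powr p * x ^ N / real N / x ^ (N - 1))
            \<le> (1 - s) * \<psi> x powr (1 - s - 1) * D x" .
        have "(s - 1) * c * \<psi> x powr (- s) * (\<psi> x powr p * x ^ N / real N / x ^ (N - 1))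
            = (s - 1) * c / real N * x * \<psi> x powr (p - s)"
        proof -
          have e0: "\<psi> x powr (p - s) = \<psi> x powr (- s) * \<psi> x powr p" by (simp add: powr_add[symmetric])
          have e2: "x ^ N / real N / x ^ (N - 1) = x / real N"
          proof -
            have "x ^ N / real N / x ^ (N - 1) = (x ^ N / x ^ (N - 1)) / real N"
              by (simp add: divide_divide_eq_left mult.commute)
            also have "\<dots> = x / real N" by (simp only: xN)
            finally show ?thesis .
          qed
          have e1: "\<psi> x powr p * x ^ N / real N / x ^ (N - 1) = \<psi> x powr p * (x ^ N / real N / x ^ (N - 1))"
            by simp
          show ?thesis unfolding e1 e2 e0 by (simp add: field_simps)
        qed
        moreover have "\<alpha> powr (p - s) \<le> \<psi> x powr (p - s)"
          using le\<alpha>[of x] x px s1 by (intro powr_mono2') auto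
        ultimately have "(s - 1) * c / real N * x * \<alpha> powr (p - s) \<le> (1 - s) * \<psi> x powr (1 - s - 1) * D x"
          using A s1 c x N by (smt (verit) divide_nonneg_nonneg mult_left_mono mult_nonneg_nonneg of_nat_0_le_iff)
        then show "0 \<le> (1 - s) * \<psi> x powr (1 - s - 1) * D x - k2 * (2 * x)"
        proof -
          have "k2 * (2 * x) = (s - 1) * c / real N * x * \<alpha> powr (p - s)" unfolding k2_def by simp
          then show ?thesis using \<open>(s - 1) * c / real N * x * \<alpha> powr (p - s) \<le> _\<close> by linarith
        qed
      qed
    qed
    moreover have "0 \<le> z 0" unfolding z_def by simp
    ultimately show ?thesis by simp
  qed
  define \<gamma> where "\<gamma> = 2 - k * (s - 1)"
  have \<gamma>: "0 < \<gamma>" unfolding \<gamma>_def using ks by simp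
  define A where "A = a powr (1 - s)"
  define r where "r = max 1 ((A / k2 + 1) powr (1 / \<gamma>))"
  have r1: "1 \<le> r" unfolding r_def by simp
  have "z r \<le> (a * r powr (- k)) powr (1 - s)"
    unfolding z_def using lower[OF r1] a r1 s1 by (intro powr_mono2') auto
  also have "\<dots> = A * r powr (k * (s - 1))"
    unfolding A_def powr_mult powr_powr by (simp add: algebra_simps)
  finally have zr: "z r \<le> A * r powr (k * (s - 1))" .
  have "k2 * r powr 2 \<le> A * r powr (k * (s - 1))"
    using zlow[of r] zr r1 by (simp add: powr_realpow)
  then have "k2 * (r powr 2 / r powr (k * (s - 1))) \<le> A"
    using r1 by (simp add: field_simps)
  then have le: "k2 * r powr \<gamma> \<le> A" unfolding \<gamma>_def by (simp add: powr_diff)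
  have "A / k2 + 1 \<le> r powr \<gamma>"
  proof -
    have "A / k2 + 1 = ((A / k2 + 1) powr (1 / \<gamma>)) powr \<gamma>"
      using \<gamma> k2 A_def by (simp add: powr_powr)
    also have "\<dots> \<le> r powr \<gamma>" unfolding r_def using \<gamma> by (intro powr_mono2) auto
    finally show ?thesis .
  qed
  then have "k2 * (A / k2 + 1) \<le> k2 * r powr \<gamma>" using k2 by (intro mult_left_mono) auto
  moreover have "k2 * (A / k2 + 1) = A + k2" using k2 by (simp add: field_simps)
  ultimately have "A + k2 \<le> A" using le by linarith
  then show False using k2 by simp
qed



definition VV :: "nat \<Rightarrow> (real \<Rightarrow> real) \<Rightarrow> real \<Rightarrow> real" where
  "VV N g r = integral {0..r} (\<lambda>t. t * g t) - integral {0..r} (\<lambda>t. t ^ (N - 1) * g t) / r ^ (N - 2)"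

lemma VV_0 [simp]: "VV N g 0 = 0"
  unfolding VV_def by simp

lemma VV_bound:
  assumes g: "continuous_on {0..r} g" and r: "0 \<le> r" and N: "2 \<le> N"
  shows "\<bar>VV N g r\<bar> \<le> integral {0..r} (\<lambda>t. t * \<bar>g t\<bar>)"
proof (cases "r = 0")
  case True then show ?thesis by simp
next
  case False
  then have r0: "0 < r" using r by simp
  have i1: "(\<lambda>t. t * g t) integrable_on {0..r}"
    by (rule integrable_continuous_interval) (intro continuous_intros g)
  have i2: "(\<lambda>t. t ^ (N - 1) * g t) integrable_on {0..r}"
    by (rule integrable_continuous_interval) (intro continuous_intros g)
  have i3: "(\<lambda>t. t ^ (N - 1) * g t / r ^ (N - 2)) integrable_on {0..r}"
    by (rule integrable_continuous_interval) (intro continuous_intros g, use r0 in auto)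
  have "VV N g r = integral {0..r} (\<lambda>t. t * g t - t ^ (N - 1) * g t / r ^ (N - 2))"
    unfolding VV_def using integral_diff[OF i1 i3] by simp
  also have "\<bar>\<dots>\<bar> \<le> integral {0..r} (\<lambda>t. t * \<bar>g t\<bar>)"
  proof -
    have "norm (integral {0..r} (\<lambda>t. t * g t - t ^ (N - 1) * g t / r ^ (N - 2))) \<le> integral {0..r} (\<lambda>t. t * \<bar>g t\<bar>)"
    proof (rule integral_norm_bound_integral)
      show "(\<lambda>t. t * g t - t ^ (N - 1) * g t / r ^ (N - 2)) integrable_on {0..r}"
        using i1 i3 by (rule integrable_diff)
      show "(\<lambda>t. t * \<bar>g t\<bar>) integrable_on {0..r}"
        by (rule integrable_continuous_interval) (intro continuous_intros g)
      fix t assume t: "t \<in> {0..r}"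
      have k1: "t ^ (N - 1) = t * t ^ (N - 2)"
      proof -
        have "N - 1 = Suc (N - 2)" using N by auto
        then show ?thesis by simp
      qed
      have k2: "t ^ (N - 2) \<le> r ^ (N - 2)" using t by (intro power_mono) auto
      have rp: "0 < r ^ (N - 2)" using r0 by simp
      define q where "q = t ^ (N - 2) / r ^ (N - 2)"
      have q: "0 \<le> q" "q \<le> 1" unfolding q_def using k2 rp t by auto
      have e: "t * g t - t ^ (N - 1) * g t / r ^ (N - 2) = t * (1 - q) * g t"
        unfolding q_def k1 by (simp add: algebra_simps)
      have "norm (t * (1 - q) * g t) = t * (1 - q) * \<bar>g t\<bar>" using t q by (simp add: abs_mult)
      also have "\<dots> = (t * \<bar>g t\<bar>) * (1 - q)" by (simp add: ac_simps)
      also have "\<dots> \<le> t * \<bar>g t\<bar>" using t q by (intro mult_right_le_one_le) auto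
      finally show "norm (t * g t - t ^ (N - 1) * g t / r ^ (N - 2)) \<le> t * \<bar>g t\<bar>" unfolding e .
    qed
    then show ?thesis by simp
  qed
  finally show ?thesis .
qed

lemma VV_diff:
  assumes "continuous_on {0..r} g1" "continuous_on {0..r} g2"
  shows "VV N g1 r - VV N g2 r = VV N (\<lambda>t. g1 t - g2 t) r"
proof -
  have i: "(\<lambda>t. t * g t) integrable_on {0..r}" "(\<lambda>t. t ^ (N - 1) * g t) integrable_on {0..r}"
    if "continuous_on {0..r} g" for g
    using that by (auto intro!: integrable_continuous_interval continuous_intros)
  have a: "integral {0..r} (\<lambda>t. t * (g1 t - g2 t)) = integral {0..r} (\<lambda>t. t * g1 t) - integral {0..r} (\<lambda>t. t * g2 t)"
    using integral_diff[OF i(1)[OF assms(1)] i(1)[OF assms(2)]] by (simp add: algebra_simps)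
  have b: "integral {0..r} (\<lambda>t. t ^ (N - 1) * (g1 t - g2 t)) = integral {0..r} (\<lambda>t. t ^ (N - 1) * g1 t) - integral {0..r} (\<lambda>t. t ^ (N - 1) * g2 t)"
    using integral_diff[OF i(2)[OF assms(1)] i(2)[OF assms(2)]] by (simp add: algebra_simps)
  show ?thesis unfolding VV_def a b by (simp add: diff_divide_distrib)
qed

lemma int_t:
  fixes r :: real
  assumes "0 \<le> r"
  shows "integral {0..r} (\<lambda>t. t) = r ^ 2 / 2"
  using int_pow[OF assms, of 1] by (simp add: integral_unique power2_eq_square)

lemma VV_cont:
  assumes g: "continuous_on {0..A} g" and N: "3 \<le> N"
  shows "continuous_on {0..A} (VV N g)"
proof -
  have "bounded (g ` {0..A})" by (intro compact_imp_bounded compact_continuous_image g) auto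
  then obtain B where B0: "\<forall>x\<in>g ` {0..A}. norm x \<le> B" by (auto simp: bounded_iff)
  have B: "\<bar>g t\<bar> \<le> B" if "t \<in> {0..A}" for t using B0 that by auto
  have c1: "continuous_on {0..A} (\<lambda>r. integral {0..r} (\<lambda>t. t * g t))"
  proof -
    have gc: "continuous_on {0..A} (\<lambda>t. t * g t)" by (intro continuous_intros g)
    show ?thesis unfolding continuous_on_eq_continuous_within
      using DERIV_continuous[OF integral_has_real_derivative[OF gc]] by blast
  qed
  have c2: "continuous_on {0..A} (\<lambda>r. integral {0..r} (\<lambda>t. t ^ (N - 1) * g t))"
  proof -
    have gc: "continuous_on {0..A} (\<lambda>t. t ^ (N - 1) * g t)" by (intro continuous_intros g)
    show ?thesis unfolding continuous_on_eq_continuous_within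
      using DERIV_continuous[OF integral_has_real_derivative[OF gc]] by blast
  qed
  show ?thesis unfolding continuous_on_eq_continuous_within
  proof
    fix x assume x: "x \<in> {0..A}"
    show "continuous (at x within {0..A}) (VV N g)"
    proof (cases "x = 0")
      case False
      then have x0: "x \<noteq> 0" by simp
      have "continuous (at x within {0..A}) (\<lambda>r. integral {0..r} (\<lambda>t. t * g t) - integral {0..r} (\<lambda>t. t ^ (N - 1) * g t) / r ^ (N - 2))"
        using c1 c2 x x0 unfolding continuous_on_eq_continuous_within
        by (intro continuous_intros) auto
      then show ?thesis unfolding VV_def[abs_def] by simp
    next
      case True
      have "(VV N g \<longlongrightarrow> 0) (at 0 within {0..A})"
      proof (rule Lim_null_comparison)
        have "((\<lambda>r. B * r ^ 2 / 2) \<longlongrightarrow> B * 0 ^ 2 / 2) (at 0 within {0..A})"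
          by (intro tendsto_intros) auto
        then show "((\<lambda>r. B * r ^ 2 / 2) \<longlongrightarrow> 0) (at 0 within {0..A})" by simp
        have "norm (VV N g r) \<le> B * r ^ 2 / 2" if r: "r \<in> {0..A}" for r
        proof -
          have gr: "continuous_on {0..r} g" using g by (rule continuous_on_subset) (use r in auto)
          have "norm (VV N g r) \<le> integral {0..r} (\<lambda>t. t * \<bar>g t\<bar>)"
            using VV_bound[OF gr] r N by auto
          also have "\<dots> \<le> integral {0..r} (\<lambda>t. B * t)"
          proof (rule integral_le)
            show "(\<lambda>t. t * \<bar>g t\<bar>) integrable_on {0..r}"
              by (rule integrable_continuous_interval) (intro continuous_intros gr)
            show "(\<lambda>t. B * t) integrable_on {0..r}"
              by (rule integrable_continuous_interval) (intro continuous_intros)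
            fix t assume "t \<in> {0..r}"
            then have t0: "0 \<le> t" and tA: "t \<in> {0..A}" using r by auto
            have "t * \<bar>g t\<bar> \<le> t * B" using B[OF tA] t0 by (rule mult_left_mono)
            then show "t * \<bar>g t\<bar> \<le> B * t" by (simp add: mult.commute)
          qed
          also have "\<dots> = B * r ^ 2 / 2" using int_t[of r] r by simp
          finally show ?thesis .
        qed
        then show "eventually (\<lambda>r. norm (VV N g r) \<le> B * r ^ 2 / 2) (at 0 within {0..A})"
          by (auto simp: eventually_at_filter)
      qed
      then show ?thesis using True by (simp add: continuous_within)
    qed
  qed
qed

lemma VV_deriv:
  assumes g: "continuous_on {0..A} g" and N: "3 \<le> N" and r: "r \<in> {0<..<A}"
  shows "(VV N g has_real_derivative (real N - 2) * integral {0..r} (\<lambda>t. t ^ (N - 1) * g t) / r ^ (N - 1)) (at r)"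
proof -
  have int: "r \<in> interior {0..A}" using r by auto
  have at: "at r within {0..A} = at r" by (rule at_within_interior[OF int])
  have gc1: "continuous_on {0..A} (\<lambda>t. t * g t)" by (intro continuous_intros g)
  have gc2: "continuous_on {0..A} (\<lambda>t. t ^ (N - 1) * g t)" by (intro continuous_intros g)
  have d1: "((\<lambda>r. integral {0..r} (\<lambda>t. t * g t)) has_real_derivative r * g r) (at r)"
    using integral_has_real_derivative[OF gc1, of r] r unfolding at by auto
  have d2: "((\<lambda>r. integral {0..r} (\<lambda>t. t ^ (N - 1) * g t)) has_real_derivative r ^ (N - 1) * g r) (at r)"
    using integral_has_real_derivative[OF gc2, of r] r unfolding at by auto
  define I where "I = integral {0..r} (\<lambda>t. t ^ (N - 1) * g t)"
  obtain k where kN: "N = Suc (Suc (Suc k))" using le_Suc_ex[OF N] by auto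
  have r0: "0 < r" using r by auto
  have "(VV N g has_real_derivative
      (r * g r - (r ^ (N - 1) * g r * r ^ (N - 2) - I * (real (N - 2) * r ^ (N - 2 - Suc 0))) / (r ^ (N - 2) * r ^ (N - 2)))) (at r)"
    unfolding VV_def[abs_def] I_def
    by (intro DERIV_diff d1 DERIV_divide d2 DERIV_pow) (use r0 in auto)
  moreover have "r * g r - (r ^ (N - 1) * g r * r ^ (N - 2) - I * (real (N - 2) * r ^ (N - 2 - Suc 0))) / (r ^ (N - 2) * r ^ (N - 2))
      = (real N - 2) * I / r ^ (N - 1)"
  proof -
    define y where "y = r ^ k"
    have y: "0 < y" unfolding y_def using r0 by simp
    have p1: "r ^ (N - 1) = r * r * y" "r ^ (N - 2) = r * y" "r ^ (N - 2 - Suc 0) = y"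
      "real N - 2 = real k + 1" "real (N - 2) = real k + 1"
      unfolding y_def kN by auto
    show ?thesis unfolding p1 using r0 y by (simp add: field_simps)
  qed
  ultimately show ?thesis unfolding I_def by simp
qed

definition fe :: "real \<Rightarrow> real \<Rightarrow> real \<Rightarrow> real" where
  "fe \<epsilon> p x = (max \<epsilon> (min x 1)) powr p"

lemma fe_bounds:
  assumes "0 < \<epsilon>" "\<epsilon> \<le> 1" "0 \<le> p"
  shows "\<epsilon> powr p \<le> fe \<epsilon> p x" "fe \<epsilon> p x \<le> 1"
  unfolding fe_def using assms by (auto intro!: powr_mono2 powr_le1)

lemma fe_cont:
  assumes "0 < \<epsilon>"
  shows "continuous_on S (fe \<epsilon> p)"
  unfolding fe_def
  by (rule continuous_on_powr') (use assms in \<open>auto intro!: continuous_intros\<close>)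

lemma fe_eq:
  assumes "\<epsilon> \<le> x" "x \<le> 1"
  shows "fe \<epsilon> p x = x powr p"
  unfolding fe_def using assms by (simp add: max_def min_def)

lemma fe_lip:
  assumes "0 < \<epsilon>" "\<epsilon> \<le> 1" "0 < p"
  shows "\<bar>fe \<epsilon> p x - fe \<epsilon> p y\<bar> \<le> p * (\<epsilon> powr (p - 1) + 1) * \<bar>x - y\<bar>"
proof -
  define X where "X = max \<epsilon> (min x 1)"
  define Y where "Y = max \<epsilon> (min y 1)"
  have "\<bar>X powr p - Y powr p\<bar> \<le> p * (\<epsilon> powr (p - 1) + 1 powr (p - 1)) * \<bar>X - Y\<bar>"
    by (rule powr_lip) (use assms in \<open>auto simp: X_def Y_def\<close>)
  then have "\<bar>X powr p - Y powr p\<bar> \<le> p * (\<epsilon> powr (p - 1) + 1) * \<bar>X - Y\<bar>" by simp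
  also have "\<dots> \<le> p * (\<epsilon> powr (p - 1) + 1) * \<bar>x - y\<bar>"
  proof -
    have "\<bar>X - Y\<bar> \<le> \<bar>x - y\<bar>" unfolding X_def Y_def by (smt (verit) max_def min_def)
    then show ?thesis using assms by (intro mult_left_mono) auto
  qed
  finally show ?thesis unfolding fe_def X_def Y_def .
qed



definition TT :: "nat \<Rightarrow> real \<Rightarrow> real \<Rightarrow> real \<Rightarrow> (real \<Rightarrow> real) \<Rightarrow> real \<Rightarrow> real" where
  "TT N c p \<epsilon> u r = 1 - c / (real N - 2) * VV N (\<lambda>t. fe \<epsilon> p (u t)) r"

lemma int_texp:
  fixes K r :: real
  assumes "0 < K" "0 \<le> r"
  shows "integral {0..r} (\<lambda>t. t * exp (K * t\<^sup>2)) = (exp (K * r\<^sup>2) - 1) / (2 * K)"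
proof -
  have "((\<lambda>t. exp (K * t\<^sup>2) / (2 * K)) has_real_derivative t * exp (K * t\<^sup>2)) (at t within {0..r})" for t
    using assms by (auto intro!: derivative_eq_intros simp: field_simps)
  then have "((\<lambda>t. t * exp (K * t\<^sup>2)) has_integral (exp (K * r\<^sup>2) / (2 * K) - exp (K * 0\<^sup>2) / (2 * K))) {0..r}"
    using assms by (intro fundamental_theorem_of_calculus) (auto simp: has_real_derivative_iff_has_vector_derivative)
  then show ?thesis by (simp add: integral_unique diff_divide_distrib)
qed

lemma TT_fixpoint:
  assumes N: "3 \<le> N" and c: "0 < c" and p: "0 < p" and e: "0 < \<epsilon>" "\<epsilon> \<le> 1" and A: "0 < A"
  shows "\<exists>u. continuous_on {0..A} u \<and> (\<forall>r\<in>{0..A}. u r = TT N c p \<epsilon> u r)"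
proof -
  define L where "L = p * (\<epsilon> powr (p - 1) + 1)"
  have L: "0 < L" unfolding L_def using p by (intro mult_pos_pos add_nonneg_pos) auto
  define K where "K = c * L"
  have K: "0 < K" unfolding K_def using c L by auto
  have N2: "0 < real N - 2" using N by auto
  define cl where "cl t = max 0 (min t A)" for t
  have clA: "cl t \<in> {0..A}" for t unfolding cl_def using A by auto
  have clc: "continuous_on UNIV cl" unfolding cl_def by (intro continuous_intros)
  have cl_id: "cl t = t" if "t \<in> {0..A}" for t using that unfolding cl_def by auto
  define U where "U w s = w s * exp (K * s\<^sup>2)" for w :: "real \<Rightarrow> real" and s
  define H where "H w \<tau> = exp (- K * \<tau>\<^sup>2) * TT N c p \<epsilon> (U w) \<tau>" for w \<tau>
  have gcont: "continuous_on S (\<lambda>t. fe \<epsilon> p (U w t))" if "continuous_on UNIV w" for w S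
  proof -
    have "continuous_on UNIV (U w)" unfolding U_def using that by (intro continuous_intros)
    then have "continuous_on S (U w)" by (rule continuous_on_subset) auto
    then show ?thesis using continuous_on_compose2[OF fe_cont[OF e(1), of UNIV p]] by auto
  qed
  have Hc: "continuous_on {0..A} (H w)" if "continuous_on UNIV w" for w
    unfolding H_def TT_def using VV_cont[OF gcont[OF that] N] by (intro continuous_intros)
  have mem: "(\<lambda>t. H (apply_bcontfun v) (cl t)) \<in> bcontfun" for v :: "real \<Rightarrow>\<^sub>C real"
  proof -
    have hc: "continuous_on {0..A} (H (apply_bcontfun v))" by (rule Hc) simp
    have "continuous_on UNIV (\<lambda>t. H (apply_bcontfun v) (cl t))"
      using hc clc clA by (intro continuous_on_compose2[OF hc clc]) auto
    moreover have "bounded (range (\<lambda>t. H (apply_bcontfun v) (cl t)))"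
    proof (rule bounded_subset)
      show "bounded (H (apply_bcontfun v) ` {0..A})"
        by (intro compact_imp_bounded compact_continuous_image hc) auto
    qed (use clA in auto)
    ultimately show ?thesis unfolding bcontfun_def by auto
  qed
  define \<Phi> where "\<Phi> v = Bcontfun (\<lambda>t. H (apply_bcontfun v) (cl t))" for v :: "real \<Rightarrow>\<^sub>C real"
  have \<Phi>app: "apply_bcontfun (\<Phi> v) t = H (apply_bcontfun v) (cl t)" for v t
    unfolding \<Phi>_def using mem[of v] by (simp add: Bcontfun_inverse)
  have contr: "dist (\<Phi> v1) (\<Phi> v2) \<le> 1/2 * dist v1 v2" for v1 v2
  proof (rule dist_bound)
    fix t
    define d where "d = dist v1 v2"
    have d0: "0 \<le> d" unfolding d_def by simp
    have vd: "\<bar>apply_bcontfun v1 s - apply_bcontfun v2 s\<bar> \<le> d" for s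
      using dist_bounded[of v1 s v2] unfolding d_def by (simp add: dist_real_def)
    define \<tau> where "\<tau> = cl t"
    have \<tau>: "\<tau> \<in> {0..A}" unfolding \<tau>_def by (rule clA)
    define g1 where "g1 t = fe \<epsilon> p (U (apply_bcontfun v1) t)" for t
    define g2 where "g2 t = fe \<epsilon> p (U (apply_bcontfun v2) t)" for t
    have g1c: "continuous_on {0..\<tau>} g1" unfolding g1_def by (rule gcont) simp
    have g2c: "continuous_on {0..\<tau>} g2" unfolding g2_def by (rule gcont) simp
    have gd: "\<bar>g1 s - g2 s\<bar> \<le> L * d * exp (K * s\<^sup>2)" for s
    proof -
      have "\<bar>g1 s - g2 s\<bar> \<le> L * \<bar>U (apply_bcontfun v1) s - U (apply_bcontfun v2) s\<bar>"
        unfolding g1_def g2_def L_def by (rule fe_lip) (use e p in auto)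
      also have "\<bar>U (apply_bcontfun v1) s - U (apply_bcontfun v2) s\<bar> = \<bar>apply_bcontfun v1 s - apply_bcontfun v2 s\<bar> * exp (K * s\<^sup>2)"
        unfolding U_def by (simp add: abs_mult left_diff_distrib[symmetric])
      also have "L * \<dots> \<le> L * (d * exp (K * s\<^sup>2))"
        using vd[of s] L by (intro mult_left_mono mult_right_mono) auto
      finally show ?thesis by (simp add: ac_simps)
    qed
    have "\<bar>VV N g1 \<tau> - VV N g2 \<tau>\<bar> = \<bar>VV N (\<lambda>t. g1 t - g2 t) \<tau>\<bar>" using VV_diff[OF g1c g2c] by simp
    also have "\<dots> \<le> integral {0..\<tau>} (\<lambda>t. t * \<bar>g1 t - g2 t\<bar>)"
      by (rule VV_bound) (use g1c g2c \<tau> N in \<open>auto intro: continuous_intros\<close>)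
    also have "\<dots> \<le> integral {0..\<tau>} (\<lambda>t. L * d * (t * exp (K * t\<^sup>2)))"
    proof (rule integral_le)
      show "(\<lambda>t. t * \<bar>g1 t - g2 t\<bar>) integrable_on {0..\<tau>}"
        by (rule integrable_continuous_interval) (intro continuous_intros g1c g2c)
      show "(\<lambda>t. L * d * (t * exp (K * t\<^sup>2))) integrable_on {0..\<tau>}"
        by (rule integrable_continuous_interval) (intro continuous_intros)
      fix s assume s: "s \<in> {0..\<tau>}"
      then have "s * \<bar>g1 s - g2 s\<bar> \<le> s * (L * d * exp (K * s\<^sup>2))" using gd[of s] by (intro mult_left_mono) auto
      then show "s * \<bar>g1 s - g2 s\<bar> \<le> L * d * (s * exp (K * s\<^sup>2))" by (simp add: ac_simps)
    qed
    also have "\<dots> = L * d * ((exp (K * \<tau>\<^sup>2) - 1) / (2 * K))" using int_texp[OF K, of \<tau>] \<tau> by simp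
    also have "\<dots> \<le> L * d * (exp (K * \<tau>\<^sup>2) / (2 * K))"
      using L d0 K by (intro mult_left_mono divide_right_mono) auto
    finally have Vb: "\<bar>VV N g1 \<tau> - VV N g2 \<tau>\<bar> \<le> L * d * (exp (K * \<tau>\<^sup>2) / (2 * K))" .
    have "H (apply_bcontfun v1) \<tau> - H (apply_bcontfun v2) \<tau> = - exp (- K * \<tau>\<^sup>2) * (c / (real N - 2)) * (VV N g1 \<tau> - VV N g2 \<tau>)"
      unfolding H_def TT_def g1_def g2_def by (simp add: algebra_simps)
    then have "\<bar>H (apply_bcontfun v1) \<tau> - H (apply_bcontfun v2) \<tau>\<bar> = exp (- K * \<tau>\<^sup>2) * (c / (real N - 2)) * \<bar>VV N g1 \<tau> - VV N g2 \<tau>\<bar>"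
      using c N2 by (simp add: abs_mult)
    also have "\<dots> \<le> exp (- K * \<tau>\<^sup>2) * (c / (real N - 2)) * (L * d * (exp (K * \<tau>\<^sup>2) / (2 * K)))"
      using Vb c N2 by (intro mult_left_mono) auto
    also have "\<dots> = d / (2 * (real N - 2))"
    proof -
      have "exp (- K * \<tau>\<^sup>2) * exp (K * \<tau>\<^sup>2) = 1" by (simp add: exp_minus[symmetric] exp_add[symmetric])
      then show ?thesis unfolding K_def using c L N2 by (simp add: field_simps)
    qed
    also have "\<dots> \<le> 1/2 * d"
    proof -
      have "1 \<le> real N - 2" using N by auto
      then have "d / (2 * (real N - 2)) \<le> d / (2 * 1)" using d0 by (intro divide_left_mono) auto
      then show ?thesis by simp
    qed
    finally show "dist (apply_bcontfun (\<Phi> v1) t) (apply_bcontfun (\<Phi> v2) t) \<le> 1/2 * dist v1 v2"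
      unfolding \<Phi>app dist_real_def \<tau>_def d_def .
  qed
  obtain v where v: "\<Phi> v = v" using banach_fix_type[of "1/2" \<Phi>] contr by auto
  define u where "u = U (apply_bcontfun v)"
  have uc: "continuous_on {0..A} u" unfolding u_def U_def by (intro continuous_intros) auto
  have "u r = TT N c p \<epsilon> u r" if r: "r \<in> {0..A}" for r
  proof -
    have "apply_bcontfun v r = H (apply_bcontfun v) r" using \<Phi>app[of v r] v cl_id[OF r] by simp
    then have "u r = exp (- K * r\<^sup>2) * TT N c p \<epsilon> u r * exp (K * r\<^sup>2)"
      unfolding u_def H_def by (simp add: U_def)
    also have "\<dots> = TT N c p \<epsilon> u r"
    proof -
      have "exp (- K * r\<^sup>2) * exp (K * r\<^sup>2) = 1" by (simp add: exp_minus[symmetric] exp_add[symmetric])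
      then show ?thesis by (simp add: ac_simps)
    qed
    finally show ?thesis .
  qed
  then show ?thesis using uc by blast
qed



lemma trunc_sol:
  assumes N: "3 \<le> N" and c: "0 < c" and p: "0 < p" and e: "0 < \<epsilon>" "\<epsilon> < 1"
  shows "\<exists>r u. PS N c p 1 r u \<and> u r = \<epsilon> \<and> (\<forall>t\<in>{0..r}. \<epsilon> \<le> u t)"
proof -
  define A where "A = sqrt (2 * real N / (c * \<epsilon> powr p)) + 1"
  have ep: "0 < \<epsilon> powr p" using e by simp
  have A: "0 < A" unfolding A_def using c ep by (intro add_nonneg_pos) auto
  have A2: "2 * real N / (c * \<epsilon> powr p) \<le> A\<^sup>2"
  proof -
    have "sqrt (2 * real N / (c * \<epsilon> powr p)) \<le> A" unfolding A_def by simp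
    then have "(sqrt (2 * real N / (c * \<epsilon> powr p)))\<^sup>2 \<le> A\<^sup>2" using c ep by (intro power_mono) auto
    then show ?thesis using c ep by simp
  qed
  obtain u where uc: "continuous_on {0..A} u" and fp: "\<And>r. r \<in> {0..A} \<Longrightarrow> u r = TT N c p \<epsilon> u r"
    using TT_fixpoint[OF N c p e(1) _ A] e by auto
  define g where "g t = fe \<epsilon> p (u t)" for t
  have gc: "continuous_on {0..A} g" unfolding g_def
    using continuous_on_compose2[OF fe_cont[OF e(1), of UNIV p] uc] by auto
  have gb: "\<epsilon> powr p \<le> g t" "g t \<le> 1" for t unfolding g_def using fe_bounds[of \<epsilon> p] e p by auto
  define Gg where "Gg r = integral {0..r} (\<lambda>t. t ^ (N - 1) * g t)" for r
  define D where "D r = - c * (Gg r / r ^ (N - 1))" for r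
  have N2: "0 < real N - 2" using N by auto
  have u0: "u 0 = 1" using fp[of 0] A unfolding TT_def by simp
  have ueq: "u r = 1 - c / (real N - 2) * VV N g r" if "r \<in> {0..A}" for r
    using fp[OF that] unfolding TT_def g_def by simp
  have intA: "r \<in> interior {0..A}" if "r \<in> {0<..<A}" for r using that by auto
  have ud: "(u has_real_derivative D r) (at r)" if r: "r \<in> {0<..<A}" for r
  proof -
    have "((\<lambda>r. 1 - c / (real N - 2) * VV N g r) has_real_derivative
        (0 - c / (real N - 2) * ((real N - 2) * Gg r / r ^ (N - 1)))) (at r)"
      unfolding Gg_def by (intro DERIV_diff DERIV_const DERIV_cmult VV_deriv[OF gc N r])
    moreover have "0 - c / (real N - 2) * ((real N - 2) * Gg r / r ^ (N - 1)) = D r"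
      unfolding D_def using N2 by simp
    ultimately have "((\<lambda>r. 1 - c / (real N - 2) * VV N g r) has_real_derivative D r) (at r)" by simp
    then show ?thesis
      by (rule has_field_derivative_transform_within_open[where S = "{0<..<A}"]) (use r ueq in auto)
  qed
  obtain k where kN: "N = Suc (Suc (Suc k))" using le_Suc_ex[OF N] by auto
  have Dd: "(D has_real_derivative (- c * g r - (real N - 1) / r * D r)) (at r)" if r: "r \<in> {0<..<A}" for r
  proof -
    have gc2: "continuous_on {0..A} (\<lambda>t. t ^ (N - 1) * g t)" by (intro continuous_intros gc)
    have at: "at r within {0..A} = at r" by (rule at_within_interior[OF intA[OF r]])
    have Gd: "(Gg has_real_derivative r ^ (N - 1) * g r) (at r)"
      using integral_has_real_derivative[OF gc2, of r] r unfolding at Gg_def by auto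
    have r0: "0 < r" using r by auto
    have "(D has_real_derivative (- c * ((r ^ (N - 1) * g r * r ^ (N - 1) - Gg r * (real (N - 1) * r ^ (N - 1 - Suc 0))) / (r ^ (N - 1) * r ^ (N - 1))))) (at r)"
    proof -
      have "((\<lambda>r. Gg r / r ^ (N - 1)) has_real_derivative
          ((r ^ (N - 1) * g r * r ^ (N - 1) - Gg r * (real (N - 1) * r ^ (N - 1 - Suc 0))) / (r ^ (N - 1) * r ^ (N - 1)))) (at r)"
        by (intro DERIV_divide Gd DERIV_pow) (use r0 in auto)
      then show ?thesis unfolding D_def by (rule DERIV_cmult)
    qed
    moreover have "- c * ((r ^ (N - 1) * g r * r ^ (N - 1) - Gg r * (real (N - 1) * r ^ (N - 1 - Suc 0))) / (r ^ (N - 1) * r ^ (N - 1)))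
        = - c * g r - (real N - 1) / r * D r"
    proof -
      define y where "y = r ^ k"
      have y: "0 < y" unfolding y_def using r0 by simp
      have p1: "r ^ (N - 1) = r * r * y" "r ^ (N - 1 - Suc 0) = r * y"
        "real N - 1 = real k + 2" "real (N - 1) = real k + 2"
        unfolding y_def kN by auto
      show ?thesis unfolding D_def p1 using r0 y by (simp add: field_simps)
    qed
    ultimately show ?thesis by simp
  qed
  have Glow: "\<epsilon> powr p * r ^ N / real N \<le> Gg r" if r: "r \<in> {0..A}" for r
  proof -
    have Nk: "Suc (N - 1) = N" using N by auto
    have hi: "((\<lambda>t. \<epsilon> powr p * t ^ (N - 1)) has_integral \<epsilon> powr p * (r ^ N / real N)) {0..r}"
      using has_integral_mult_right[OF int_pow[of r "N - 1"]] r Nk by auto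
    have "\<epsilon> powr p * (r ^ N / real N) \<le> Gg r"
      unfolding Gg_def
    proof (rule has_integral_le[OF hi])
      have "continuous_on {0..r} (\<lambda>t. t ^ (N - 1) * g t)"
        by (intro continuous_intros) (rule continuous_on_subset[OF gc], use r in auto)
      then show "((\<lambda>t. t ^ (N - 1) * g t) has_integral integral {0..r} (\<lambda>t. t ^ (N - 1) * g t)) {0..r}"
        using integrable_continuous_interval by blast
      fix t assume t: "t \<in> {0..r}"
      show "\<epsilon> powr p * t ^ (N - 1) \<le> t ^ (N - 1) * g t"
        using gb(1)[of t] t by (simp add: mult.commute mult_right_mono)
    qed
    then show ?thesis by simp
  qed
  have Dneg: "D r < 0" if r: "r \<in> {0<..<A}" for r
  proof -
    have "0 < \<epsilon> powr p * r ^ N / real N" using r ep N by auto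
    then have "0 < Gg r" using Glow[of r] r by auto
    then show ?thesis unfolding D_def using c r by (intro mult_neg_pos divide_pos_pos) auto
  qed
  have udec: "u y < u x" if xy: "0 \<le> x" "x < y" "y \<le> A" for x y
  proof (rule DERIV_neg_imp_decreasing_open[OF xy(2)])
    show "continuous_on {x..y} u" using uc by (rule continuous_on_subset) (use xy in auto)
    fix z assume z: "x < z" "z < y"
    then have zz: "z \<in> {0<..<A}" using xy by auto
    show "\<exists>d. (u has_real_derivative d) (at z) \<and> d < 0" using ud[OF zz] Dneg[OF zz] by blast
  qed
  have uA: "u A < \<epsilon>"
  proof -
    define h where "h r = u r + c * \<epsilon> powr p * r\<^sup>2 / (2 * real N)" for r
    have "h A \<le> h 0"
    proof (rule DERIV_nonpos_imp_decreasing_open[of 0 A h])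
      show "0 \<le> A" using A by simp
      show "continuous_on {0..A} h" unfolding h_def using uc N by (intro continuous_intros) auto
      fix x assume x: "0 < x" "x < A"
      then have xx: "x \<in> {0<..<A}" by auto
      show "\<exists>y. (h has_real_derivative y) (at x) \<and> y \<le> 0"
      proof (intro exI conjI)
        show "(h has_real_derivative (D x + c * \<epsilon> powr p * (2 * x) / (2 * real N))) (at x)"
          unfolding h_def using ud[OF xx] N by (auto intro!: derivative_eq_intros)
        have "c * (\<epsilon> powr p * x ^ N / real N) / x ^ (N - 1) \<le> c * Gg x / x ^ (N - 1)"
          using Glow[of x] x c by (intro divide_right_mono mult_left_mono) auto
        moreover have "c * (\<epsilon> powr p * x ^ N / real N) / x ^ (N - 1) = c * \<epsilon> powr p * (2 * x) / (2 * real N)"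
        proof -
          have "x ^ N = x * x ^ (N - 1)" using N by (metis Suc_diff_1 less_le_trans zero_less_numeral power_Suc)
          then show ?thesis using x by (simp add: field_simps)
        qed
        ultimately show "D x + c * \<epsilon> powr p * (2 * x) / (2 * real N) \<le> 0" unfolding D_def by simp
      qed
    qed
    then have "u A + c * \<epsilon> powr p * A\<^sup>2 / (2 * real N) \<le> 1" unfolding h_def u0 by simp
    moreover have "1 \<le> c * \<epsilon> powr p * A\<^sup>2 / (2 * real N)"
    proof -
      have "2 * real N \<le> (c * \<epsilon> powr p) * A\<^sup>2" using A2 c ep by (simp add: divide_le_eq mult.commute)
      then show ?thesis using N by (simp add: field_simps)
    qed
    ultimately show ?thesis using e by linarith
  qed
  obtain r where r: "0 \<le> r" "r \<le> A" "u r = \<epsilon>"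
    using IVT2'[of u A \<epsilon> 0] uA u0 e A uc by auto
  have r0: "0 < r" using r u0 e by (cases "r = 0") auto
  have rA: "r < A" using r uA by (cases "r = A") auto
  have ge: "\<epsilon> \<le> u t" if t: "t \<in> {0..r}" for t
  proof (cases "t = r")
    case True then show ?thesis using r by simp
  next
    case False then show ?thesis using udec[of t r] t r by auto
  qed
  have le1: "u t \<le> 1" if t: "t \<in> {0..A}" for t
    using udec[of 0 t] t u0 by (cases "t = 0") auto
  have gu: "g t = u t powr p" if t: "t \<in> {0..r}" for t
    unfolding g_def using ge[OF t] le1[of t] t r by (intro fe_eq) auto
  have d0: "(u has_real_derivative 0) (at 0 within {0..A})"
  proof -
    define C where "C = c / (real N - 2) / 2"
    have bnd: "\<bar>(u y - u 0) / (y - 0)\<bar> \<le> C * y" if y: "y \<in> {0..A}" "y \<noteq> 0" for y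
    proof -
      have gy: "continuous_on {0..y} g" using gc by (rule continuous_on_subset) (use y in auto)
      have "\<bar>VV N g y\<bar> \<le> integral {0..y} (\<lambda>t. t * \<bar>g t\<bar>)" using VV_bound[OF gy] y N by auto
      also have "\<dots> \<le> integral {0..y} (\<lambda>t. t)"
      proof (rule integral_le)
        show "(\<lambda>t. t * \<bar>g t\<bar>) integrable_on {0..y}"
          by (rule integrable_continuous_interval) (intro continuous_intros gy)
        show "(\<lambda>t. t) integrable_on {0..y}" by (rule integrable_continuous_interval) (intro continuous_intros)
        fix t assume tt: "t \<in> {0..y}"
        have g0: "0 \<le> g t" using gb(1)[of t] ep by linarith
        show "t * \<bar>g t\<bar> \<le> t" using tt gb(2)[of t] g0 by (intro mult_right_le_one_le) auto
      qed
      also have "\<dots> = y\<^sup>2 / 2" using int_t[of y] y by simp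
      finally have vb: "\<bar>VV N g y\<bar> \<le> y\<^sup>2 / 2" .
      have "\<bar>u y - u 0\<bar> = c / (real N - 2) * \<bar>VV N g y\<bar>" using ueq[OF y(1)] u0 c N2 by (simp add: abs_mult)
      also have "\<dots> \<le> c / (real N - 2) * (y\<^sup>2 / 2)" using vb c N2 by (intro mult_left_mono) auto
      finally have "\<bar>u y - u 0\<bar> \<le> c / (real N - 2) * (y\<^sup>2 / 2)" .
      moreover have yp: "0 < y" using y by auto
      ultimately show ?thesis unfolding C_def by (simp add: abs_divide field_simps power2_eq_square)
    qed
    have "((\<lambda>y. (u y - u 0) / (y - 0)) \<longlongrightarrow> 0) (at 0 within {0..A})"
    proof (rule Lim_null_comparison)
      show "eventually (\<lambda>y. norm ((u y - u 0) / (y - 0)) \<le> C * y) (at 0 within {0..A})"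
        using bnd by (auto simp: eventually_at_filter)
      have "((\<lambda>y. C * y) \<longlongrightarrow> C * 0) (at 0 within {0..A})" by (intro tendsto_intros)
      then show "((\<lambda>y. C * y) \<longlongrightarrow> 0) (at 0 within {0..A})" by simp
    qed
    then show ?thesis by (simp add: has_field_derivative_iff)
  qed
  have "PS N c p 1 r u"
    unfolding PS_def
  proof (intro conjI)
    show "0 < r" by (rule r0)
    show "u 0 = 1" by (rule u0)
    show "continuous_on {0..r} u" using uc by (rule continuous_on_subset) (use rA in auto)
    show "(u has_real_derivative 0) (at 0 within {0..r})"
      using d0 by (rule has_field_derivative_subset) (use rA in auto)
    show "\<exists>\<psi>'. \<forall>\<rho>\<in>{0<..<r}. (u has_real_derivative \<psi>' \<rho>) (at \<rho>) \<and>
        (\<psi>' has_real_derivative (- c * u \<rho> powr p - (real N - 1) / \<rho> * \<psi>' \<rho>)) (at \<rho>)"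
    proof (intro exI ballI conjI)
      fix \<rho> assume \<rho>: "\<rho> \<in> {0<..<r}"
      then have \<rho>A: "\<rho> \<in> {0<..<A}" using rA by auto
      show "(u has_real_derivative D \<rho>) (at \<rho>)" by (rule ud[OF \<rho>A])
      show "(D has_real_derivative (- c * u \<rho> powr p - (real N - 1) / \<rho> * D \<rho>)) (at \<rho>)"
        using Dd[OF \<rho>A] gu[of \<rho>] \<rho> by auto
    qed
    show "\<forall>t\<in>{0..r}. 0 < u t" using ge e by (auto intro: less_le_trans)
  qed
  then show ?thesis using r ge by blast
qed



definition LEg :: "nat \<Rightarrow> real \<Rightarrow> real \<Rightarrow> real \<Rightarrow> real \<Rightarrow> (real \<Rightarrow> real) \<Rightarrow> bool" where
  "LEg N c p \<alpha> R \<psi> \<longleftrightarrow>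
     0 < R \<and> \<psi> 0 = \<alpha> \<and> continuous_on {0..R} \<psi> \<and>
     (\<psi> has_real_derivative 0) (at 0 within {0..R}) \<and>
     (\<exists>\<psi>'. \<forall>r\<in>{0<..<R}.
        (\<psi> has_real_derivative \<psi>' r) (at r) \<and>
        (\<psi>' has_real_derivative (- c * \<psi> r powr p - (real N - 1) / r * \<psi>' r)) (at r)) \<and>
     (\<forall>r\<in>{0..<R}. 0 < \<psi> r) \<and> \<psi> R = 0"

lemma PS_D2:
  assumes ps: "PS N c p \<alpha> b \<psi>" and N: "2 \<le> N" and r: "r \<in> {0<..<b}"
  shows "((\<lambda>r. - c * Gint N p \<psi> r / r ^ (N - 1)) has_real_derivative
     (- c * \<psi> r powr p - (real N - 1) / r * (- c * Gint N p \<psi> r / r ^ (N - 1)))) (at r)"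
proof -
  from ps obtain \<psi>' where
    d: "\<And>r. r\<in>{0<..<b} \<Longrightarrow> (\<psi> has_real_derivative \<psi>' r) (at r) \<and>
        (\<psi>' has_real_derivative (- c * \<psi> r powr p - (real N - 1) / r * \<psi>' r)) (at r)"
    unfolding PS_def by blast
  have eq: "\<psi>' x = - c * Gint N p \<psi> x / x ^ (N - 1)" if "x \<in> {0<..<b}" for x
    using d[OF that] PS_deriv_formula[OF ps N] that DERIV_unique by blast
  have "(\<psi>' has_real_derivative (- c * \<psi> r powr p - (real N - 1) / r * \<psi>' r)) (at r)" using d[OF r] by auto
  then have "((\<lambda>r. - c * Gint N p \<psi> r / r ^ (N - 1)) has_real_derivative (- c * \<psi> r powr p - (real N - 1) / r * \<psi>' r)) (at r)"
    by (rule has_field_derivative_transform_within_open[where S = "{0<..<b}"]) (use r eq in auto)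
  then show ?thesis using eq[OF r] by simp
qed

lemma exists_sol:
  assumes N: "3 \<le> N" and c: "0 < c" and p: "0 < p" and pN: "p < real N / (real N - 2)"
  shows "\<exists>R \<psi>. LEg N c p 1 R \<psi>"
proof -
  have N2: "2 \<le> N" using N by auto
  define \<epsilon> where "\<epsilon> n = 1 / (real n + 2)" for n :: nat
  have e: "0 < \<epsilon> n" "\<epsilon> n < 1" for n unfolding \<epsilon>_def by auto
  have emono: "\<epsilon> m < \<epsilon> n" if "n < m" for n m unfolding \<epsilon>_def using that by (auto simp: field_simps)
  have "\<forall>n. \<exists>ru. PS N c p 1 (fst ru) (snd ru) \<and> snd ru (fst ru) = \<epsilon> n \<and> (\<forall>t\<in>{0..fst ru}. \<epsilon> n \<le> snd ru t)"
    using trunc_sol[OF N c p e(1) e(2)] by auto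
  then obtain f where f: "\<And>n. PS N c p 1 (fst (f n)) (snd (f n)) \<and> snd (f n) (fst (f n)) = \<epsilon> n \<and> (\<forall>t\<in>{0..fst (f n)}. \<epsilon> n \<le> snd (f n) t)"
    by metis
  define R where "R n = fst (f n)" for n
  define U where "U n = snd (f n)" for n
  have psU: "PS N c p 1 (R n) (U n)" and UR: "U n (R n) = \<epsilon> n" and Uge: "\<And>t. t \<in> {0..R n} \<Longrightarrow> \<epsilon> n \<le> U n t" for n
    using f unfolding R_def U_def by auto
  have Rpos: "0 < R n" for n using psU[of n] unfolding PS_def by auto
  have cons: "R n < R m \<and> (\<forall>t\<in>{0..R n}. U m t = U n t)" if nm: "n < m" for n m
  proof -
    define b where "b = min (R n) (R m)"
    have b: "0 < b" "b \<le> R n" "b \<le> R m" unfolding b_def using Rpos by auto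
    have eqb: "\<forall>t\<in>{0..b}. U n t = U m t"
      using PS_unique[OF PS_mono[OF psU b(1,2)] PS_mono[OF psU b(1,3)] c N2 p] .
    have "R n < R m"
    proof (rule ccontr)
      assume "\<not> R n < R m"
      then have bm: "b = R m" unfolding b_def by auto
      then have "U n (R m) = \<epsilon> m" using eqb UR[of m] Rpos[of m] by auto
      moreover have "\<epsilon> n \<le> U n (R m)" using Uge[of "R m" n] bm b Rpos[of m] by auto
      ultimately show False using emono[OF nm] by auto
    qed
    moreover then have "b = R n" unfolding b_def by auto
    ultimately show ?thesis using eqb by auto
  qed
  have Rmono: "R n \<le> R m" if "n \<le> m" for n m using cons[of n m] that by (cases "n = m") auto
  define \<Psi> where "\<Psi> t = (if \<exists>n. t < R n then U (LEAST n. t < R n) t else 0)" for t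
  have \<Psi>U: "\<Psi> t = U n t" if t: "0 \<le> t" "t \<le> R n" and ex: "\<exists>m. t < R m" for t n
  proof -
    define n0 where "n0 = (LEAST n. t < R n)"
    have n0: "t < R n0" unfolding n0_def using ex by (metis LeastI)
    have "\<Psi> t = U n0 t" unfolding \<Psi>_def n0_def using ex by auto
    also have "\<dots> = U n t"
    proof (cases "n0 = n")
      case False
      then consider "n0 < n" | "n < n0" by linarith
      then show ?thesis
      proof cases
        case 1 then show ?thesis using cons[OF 1] t n0 by auto
      next
        case 2 then show ?thesis using cons[OF 2] t by auto
      qed
    qed simp
    finally show ?thesis .
  qed
  have bounded: "\<exists>B. \<forall>n. R n \<le> B"
  proof (rule ccontr)
    assume nb: "\<not> ?thesis"
    have exn: "\<exists>n. b < R n" for b using nb by (meson not_le)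
    have "PS N c p 1 b \<Psi>" if b: "0 < b" for b
    proof -
      obtain n where n: "b < R n" using exn by blast
      have "PS N c p 1 b (U n)" using PS_mono[OF psU b] n by auto
      moreover have "\<forall>x\<in>{0..b}. \<Psi> x = U n x"
      proof
        fix x assume x: "x \<in> {0..b}"
        then have "x < R n" using n by auto
        then show "\<Psi> x = U n x" using \<Psi>U[of x n] x by auto
      qed
      ultimately show ?thesis by (rule PS_cong)
    qed
    then show False using PS_global_False[OF N c p pN, of 1 \<Psi>] by auto
  qed
  then obtain B where B: "\<And>n. R n \<le> B" by blast
  define Rs where "Rs = Sup (range R)"
  have bdd: "bdd_above (range R)" unfolding bdd_above_def using B by auto
  have RRs: "R n < Rs" for n
  proof -
    have "R n < R (Suc n)" using cons[of n "Suc n"] by auto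
    also have "R (Suc n) \<le> Rs" unfolding Rs_def using bdd by (intro cSup_upper) auto
    finally show ?thesis .
  qed
  have Rs0: "0 < Rs" using RRs[of 0] Rpos[of 0] by auto
  have exR: "\<exists>n. t < R n" if "t < Rs" for t
  proof (rule ccontr)
    assume "\<not> ?thesis"
    then have "\<forall>n. R n \<le> t" by (simp add: not_less)
    then have "Rs \<le> t" unfolding Rs_def by (intro cSup_least) auto
    then show False using that by simp
  qed
  have \<Psi>U2: "\<Psi> t = U n t" if "0 \<le> t" "t \<le> R n" for t n
    using \<Psi>U[OF that exR] RRs[of n] that by auto
  have ps\<Psi>: "PS N c p 1 (R n) \<Psi>" for n
    using PS_cong[OF psU[of n], of \<Psi>] \<Psi>U2 by auto
  have \<Psi>Rs: "\<Psi> t = 0" if "Rs \<le> t" for t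
  proof -
    have "\<not> (\<exists>n. t < R n)" using RRs that by (meson less_trans not_le)
    then show ?thesis unfolding \<Psi>_def by auto
  qed
  have \<Psi>dec: "\<Psi> y \<le> \<Psi> x" if xy: "0 \<le> x" "x \<le> y" "y < Rs" for x y
  proof -
    obtain n where n: "y < R n" using exR xy by blast
    show ?thesis using PS_decr[OF ps\<Psi>[of n] _ N2, of x y] c xy n by auto
  qed
  have \<Psi>pos: "0 < \<Psi> t" if tt: "0 \<le> t" "t < Rs" for t
  proof -
    obtain n where n: "t < R n" using exR tt by blast
    show ?thesis using ps\<Psi>[of n] tt n unfolding PS_def by auto
  qed
  have \<Psi>eps: "\<Psi> (R n) = \<epsilon> n" for n using \<Psi>U2[of "R n" n] UR Rpos[of n] by auto
  show ?thesis
  proof (intro exI)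
    show "LEg N c p 1 Rs \<Psi>"
      unfolding LEg_def
    proof (intro conjI)
      show "0 < Rs" by (rule Rs0)
      show "\<Psi> 0 = 1" using ps\<Psi>[of 0] unfolding PS_def by auto
      show "\<Psi> Rs = 0" using \<Psi>Rs by auto
      show "\<forall>r\<in>{0..<Rs}. 0 < \<Psi> r" using \<Psi>pos by auto
      show "(\<Psi> has_real_derivative 0) (at 0 within {0..Rs})"
      proof -
        have d: "(\<Psi> has_real_derivative 0) (at 0 within {0..R 0})" using ps\<Psi>[of 0] unfolding PS_def by auto
        have "at 0 within {0..Rs} = at 0 within {0..R 0}"
          by (rule at_within_nhd[where S = "{..<R 0}"]) (use Rpos[of 0] RRs[of 0] in auto)
        then show ?thesis using d by simp
      qed
      show "\<exists>\<psi>'. \<forall>r\<in>{0<..<Rs}. (\<Psi> has_real_derivative \<psi>' r) (at r) \<and>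
        (\<psi>' has_real_derivative (- c * \<Psi> r powr p - (real N - 1) / r * \<psi>' r)) (at r)"
      proof (intro exI ballI conjI)
        fix r assume r: "r \<in> {0<..<Rs}"
        obtain n where n: "r < R n" using exR r by auto
        have rn: "r \<in> {0<..<R n}" using r n by auto
        show "(\<Psi> has_real_derivative (- c * Gint N p \<Psi> r / r ^ (N - 1))) (at r)"
          using PS_deriv_formula[OF ps\<Psi>[of n] N2] rn by auto
        show "((\<lambda>r. - c * Gint N p \<Psi> r / r ^ (N - 1)) has_real_derivative
          (- c * \<Psi> r powr p - (real N - 1) / r * (- c * Gint N p \<Psi> r / r ^ (N - 1)))) (at r)"
          by (rule PS_D2[OF ps\<Psi>[of n] N2 rn])
      qed
      show "continuous_on {0..Rs} \<Psi>"
        unfolding continuous_on_eq_continuous_within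
      proof
        fix x assume x: "x \<in> {0..Rs}"
        show "continuous (at x within {0..Rs}) \<Psi>"
        proof (cases "x < Rs")
          case True
          obtain n where n: "x < R n" using exR True by blast
          have cn: "continuous_on {0..R n} \<Psi>" using ps\<Psi>[of n] unfolding PS_def by auto
          have "continuous (at x within {0..R n}) \<Psi>"
            using cn x n unfolding continuous_on_eq_continuous_within by auto
          moreover have "at x within {0..Rs} = at x within {0..R n}"
            by (rule at_within_nhd[where S = "{..<R n}"]) (use x n RRs[of n] in auto)
          ultimately show ?thesis unfolding continuous_within by simp
        next
          case False
          then have xR: "x = Rs" using x by auto
          have "(\<Psi> \<longlongrightarrow> 0) (at Rs within {0..Rs})"
          proof (rule tendstoI)
            fix \<eta> :: real assume \<eta>: "0 < \<eta>"
            obtain n :: nat where n: "1 / \<eta> < real n" using reals_Archimedean2 by blast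
            have en: "\<epsilon> n < \<eta>"
            proof -
              have "1 / \<eta> < real n + 2" using n by simp
              then have "1 < \<eta> * (real n + 2)" using \<eta> by (simp add: field_simps)
              then show ?thesis unfolding \<epsilon>_def using \<eta> by (simp add: field_simps)
            qed
            have "\<forall>y\<in>{0..Rs}. y \<noteq> Rs \<and> dist y Rs < Rs - R n \<longrightarrow> dist (\<Psi> y) 0 < \<eta>"
            proof (intro ballI impI)
              fix y assume y: "y \<in> {0..Rs}" and yy: "y \<noteq> Rs \<and> dist y Rs < Rs - R n"
              then have y1: "R n < y" "y < Rs" by (auto simp: dist_real_def)
              have "\<Psi> y \<le> \<Psi> (R n)" using \<Psi>dec[of "R n" y] y1 Rpos[of n] by auto
              moreover have "0 < \<Psi> y" using \<Psi>pos[of y] y1 Rpos[of n] by auto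
              ultimately show "dist (\<Psi> y) 0 < \<eta>" using \<Psi>eps[of n] en by (simp add: dist_real_def)
            qed
            then show "eventually (\<lambda>y. dist (\<Psi> y) 0 < \<eta>) (at Rs within {0..Rs})"
              unfolding eventually_at using RRs[of n] by (intro exI[of _ "Rs - R n"]) auto
          qed
          then show ?thesis using xR \<Psi>Rs[of Rs] by (simp add: continuous_within)
        qed
      qed
    qed
  qed
qed



lemma LEg_PS:
  assumes "LEg N c p \<alpha> R \<psi>" "0 < b" "b < R"
  shows "PS N c p \<alpha> b \<psi>"
proof -
  from assms(1) obtain \<psi>' where R: "0 < R" and a0: "\<psi> 0 = \<alpha>" and cont: "continuous_on {0..R} \<psi>"
    and d0: "(\<psi> has_real_derivative 0) (at 0 within {0..R})"
    and pos: "\<forall>r\<in>{0..<R}. 0 < \<psi> r"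
    and d: "\<forall>r\<in>{0<..<R}. (\<psi> has_real_derivative \<psi>' r) (at r) \<and>
        (\<psi>' has_real_derivative (- c * \<psi> r powr p - (real N - 1) / r * \<psi>' r)) (at r)"
    unfolding LEg_def by blast
  have "continuous_on {0..b} \<psi>" using cont by (rule continuous_on_subset) (use assms in auto)
  moreover have "(\<psi> has_real_derivative 0) (at 0 within {0..b})"
    using d0 by (rule has_field_derivative_subset) (use assms in auto)
  moreover have "\<exists>\<psi>'. \<forall>r\<in>{0<..<b}. (\<psi> has_real_derivative \<psi>' r) (at r) \<and>
        (\<psi>' has_real_derivative (- c * \<psi> r powr p - (real N - 1) / r * \<psi>' r)) (at r)"
    using d assms by (intro exI[of _ \<psi>']) auto
  moreover have "\<forall>r\<in>{0..b}. 0 < \<psi> r" using pos assms by auto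
  ultimately show ?thesis unfolding PS_def using assms a0 by auto
qed

lemma LEg_unique_le:
  assumes l1: "LEg N c p \<alpha> R1 \<psi>1" and l2: "LEg N c p \<alpha> R2 \<psi>2" and R12: "R1 \<le> R2"
    and c: "0 < c" and N: "2 \<le> N" and p: "0 < p"
  shows "R1 = R2 \<and> (\<forall>r\<in>{0..R1}. \<psi>1 r = \<psi>2 r)"
proof -
  have R1: "0 < R1" using l1 unfolding LEg_def by auto
  have eq: "\<psi>1 t = \<psi>2 t" if t: "0 \<le> t" "t < R1" for t
  proof -
    define b where "b = max t (R1 / 2)"
    have b: "0 < b" "b < R1" "b < R2" "t \<le> b" unfolding b_def using t R1 R12 by auto
    show ?thesis using PS_unique[OF LEg_PS[OF l1 b(1,2)] LEg_PS[OF l2 b(1,3)] c N p] t b by auto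
  qed
  have c1: "continuous_on {0..R1} \<psi>1" using l1 unfolding LEg_def by auto
  have c2: "continuous_on {0..R1} \<psi>2" using l2 R12 unfolding LEg_def by (auto intro: continuous_on_subset)
  have at: "at R1 within {0..R1} = at_left R1" by (rule at_within_Icc_at_left[OF R1])
  have t1: "(\<psi>1 \<longlongrightarrow> \<psi>1 R1) (at_left R1)" using c1 R1 unfolding continuous_on_def at[symmetric] by auto
  have t2: "(\<psi>2 \<longlongrightarrow> \<psi>2 R1) (at_left R1)" using c2 R1 unfolding continuous_on_def at[symmetric] by auto
  have ev: "eventually (\<lambda>x. \<psi>2 x = \<psi>1 x) (at_left R1)"
    using eventually_at_left_real[OF R1] by eventually_elim (use eq in auto)
  have "(\<psi>1 \<longlongrightarrow> \<psi>2 R1) (at_left R1)" using tendsto_cong[OF ev] t2 by simp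
  then have eR: "\<psi>1 R1 = \<psi>2 R1" using t1 tendsto_unique trivial_limit_at_left_real by blast
  have "R1 = R2"
  proof (rule ccontr)
    assume "R1 \<noteq> R2"
    then have "R1 < R2" using R12 by simp
    then have "0 < \<psi>2 R1" using l2 R1 unfolding LEg_def by auto
    moreover have "\<psi>1 R1 = 0" using l1 unfolding LEg_def by auto
    ultimately show False using eR by simp
  qed
  moreover have "\<forall>r\<in>{0..R1}. \<psi>1 r = \<psi>2 r" using eq eR by (metis atLeastAtMost_iff order_le_less)
  ultimately show ?thesis by blast
qed

lemma LEg_unique:
  assumes l1: "LEg N c p \<alpha> R1 \<psi>1" and l2: "LEg N c p \<alpha> R2 \<psi>2"
    and c: "0 < c" and N: "2 \<le> N" and p: "0 < p"
  shows "R1 = R2 \<and> (\<forall>r\<in>{0..R1}. \<psi>1 r = \<psi>2 r)"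
proof (cases "R1 \<le> R2")
  case True then show ?thesis using LEg_unique_le[OF l1 l2 True c N p] by blast
next
  case False
  then have "R2 \<le> R1" by simp
  then show ?thesis using LEg_unique_le[OF l2 l1 _ c N p] by auto
qed

lemma LEg_mass_cont:
  assumes l: "LEg N c p \<alpha> R \<psi>" and p: "0 < p"
  shows "continuous_on {0..R} (\<lambda>s. \<psi> s powr p * s ^ (N - 1))"
proof -
  have cont: "continuous_on {0..R} \<psi>" and pos: "\<forall>r\<in>{0..<R}. 0 < \<psi> r" and z: "\<psi> R = 0"
    using l unfolding LEg_def by auto
  have "continuous_on {0..R} (\<lambda>s. \<psi> s powr p)"
  proof (rule continuous_on_powr')
    show "\<forall>x\<in>{0..R}. 0 \<le> \<psi> x \<and> (\<psi> x = 0 \<longrightarrow> 0 < p)"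
      using pos z p by (metis atLeastAtMost_iff atLeastLessThan_iff order_le_less)
  qed (use cont in \<open>auto intro: continuous_on_const\<close>)
  then show ?thesis by (rule continuous_on_mult) (intro continuous_intros)
qed

lemma LEg_mass_pos:
  assumes l: "LEg N c p \<alpha> R \<psi>" and c: "0 < c" and N: "2 \<le> N" and p: "0 < p"
  shows "0 < integral {0..R} (\<lambda>s. \<psi> s powr p * s ^ (N - 1))"
proof -
  define F where "F s = \<psi> s powr p * s ^ (N - 1)" for s
  have R: "0 < R" using l unfolding LEg_def by auto
  have Fc: "continuous_on {0..R} F" unfolding F_def by (rule LEg_mass_cont[OF l p])
  have ps: "PS N c p \<alpha> (R/2) \<psi>" using LEg_PS[OF l] R by auto
  have "integral {0..R/2} F + integral {R/2..R} F = integral {0..R} F"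
    using Henstock_Kurzweil_Integration.integral_combine[where a=0 and c="R/2" and b=R and f=F]
      R integrable_continuous_interval[OF Fc] by auto
  moreover have "0 \<le> integral {R/2..R} F"
  proof (rule integral_nonneg)
    show "F integrable_on {R/2..R}"
      using integrable_continuous_interval[of "R/2" R F] Fc continuous_on_subset[of "{0..R}" F "{R/2..R}"] R by auto
  qed (auto simp: F_def)
  moreover have "integral {0..R/2} F = Gint N p \<psi> (R/2)"
    unfolding F_def Gint_def by (simp add: mult.commute)
  moreover have "0 < \<psi> (R/2) powr p * (R/2) ^ N / real N"
  proof -
    have "0 < \<psi> (R/2)" using ps R unfolding PS_def by auto
    then show ?thesis using R N by (intro divide_pos_pos mult_pos_pos) auto
  qed
  moreover have "\<psi> (R/2) powr p * (R/2) ^ N / real N \<le> Gint N p \<psi> (R/2)"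
    using PS_Glow[OF ps _ N, of "R/2"] c p R by auto
  ultimately show ?thesis unfolding F_def by linarith
qed



lemma LEg_scale:
  assumes l: "LEg N c p \<alpha> R \<psi>" and q: "0 < q" and p: "0 < p" and N1: "1 \<le> N"
  defines "lm \<equiv> q powr ((p - 1) / 2)"
  shows "LEg N c p (q * \<alpha>) (R / lm) (\<lambda>r. q * \<psi> (lm * r))"
    and "integral {0..R / lm} (\<lambda>s. (q * \<psi> (lm * s)) powr p * s ^ (N - 1))
          = q powr p / lm ^ N * integral {0..R} (\<lambda>s. \<psi> s powr p * s ^ (N - 1))"
proof -
  from l obtain \<psi>' where R: "0 < R" and a0: "\<psi> 0 = \<alpha>" and cont: "continuous_on {0..R} \<psi>"
    and d0: "(\<psi> has_real_derivative 0) (at 0 within {0..R})"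
    and pos: "\<forall>r\<in>{0..<R}. 0 < \<psi> r" and z: "\<psi> R = 0"
    and d: "\<And>r. r\<in>{0<..<R} \<Longrightarrow> (\<psi> has_real_derivative \<psi>' r) (at r) \<and>
        (\<psi>' has_real_derivative (- c * \<psi> r powr p - (real N - 1) / r * \<psi>' r)) (at r)"
    unfolding LEg_def by blast
  have lam: "0 < lm" unfolding lm_def using q by simp
  have lam2: "q * (lm * lm) = q powr p"
  proof -
    have "lm * lm = q powr (p - 1)" unfolding lm_def by (simp add: powr_add[symmetric])
    moreover have "q * q powr (p - 1) = q powr p" using q by (simp add: powr_mult_base)
    ultimately show ?thesis by simp
  qed
  have img: "(\<lambda>r. lm * r) ` {0..R / lm} = {0..R}"
    using image_mult_atLeastAtMost[OF lam, of 0 "R / lm"] lam by simp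
  show "LEg N c p (q * \<alpha>) (R / lm) (\<lambda>r. q * \<psi> (lm * r))"
    unfolding LEg_def
  proof (intro conjI)
    show "0 < R / lm" using R lam by simp
    show "q * \<psi> (lm * 0) = q * \<alpha>" using a0 by simp
    show "continuous_on {0..R / lm} (\<lambda>r. q * \<psi> (lm * r))"
    proof -
      have "continuous_on {0..R / lm} (\<lambda>r. \<psi> (lm * r))"
        by (rule continuous_on_compose2[OF cont]) (use img in \<open>auto intro: continuous_intros\<close>)
      then show ?thesis by (intro continuous_intros)
    qed
    show "((\<lambda>r. q * \<psi> (lm * r)) has_real_derivative 0) (at 0 within {0..R / lm})"
    proof -
      have d0': "(\<psi> has_real_derivative 0) (at ((\<lambda>r. lm * r) 0) within ((\<lambda>r. lm * r) ` {0..R / lm}))"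
        using d0 img by simp
      have "((\<lambda>r. lm * r) has_real_derivative lm) (at 0 within {0..R / lm})"
        by (auto intro!: derivative_eq_intros)
      from DERIV_image_chain[OF d0' this] have "((\<lambda>r. \<psi> (lm * r)) has_real_derivative 0) (at 0 within {0..R / lm})"
        by (simp add: o_def)
      from DERIV_cmult[OF this, of q] show ?thesis by simp
    qed
    show "\<forall>r\<in>{0..<R / lm}. 0 < q * \<psi> (lm * r)"
    proof
      fix r assume r: "r \<in> {0..<R / lm}"
      then have "lm * r \<in> {0..<R}" using lam by (auto simp: field_simps)
      then show "0 < q * \<psi> (lm * r)" using pos q by auto
    qed
    show "q * \<psi> (lm * (R / lm)) = 0" using z lam by simp
    show "\<exists>\<phi>'. \<forall>r\<in>{0<..<R / lm}. ((\<lambda>r. q * \<psi> (lm * r)) has_real_derivative \<phi>' r) (at r) \<and>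
        (\<phi>' has_real_derivative (- c * (q * \<psi> (lm * r)) powr p - (real N - 1) / r * \<phi>' r)) (at r)"
    proof (intro exI ballI conjI)
      fix r assume r: "r \<in> {0<..<R / lm}"
      then have lr: "lm * r \<in> {0<..<R}" using lam by (auto simp: field_simps)
      have r0: "0 < r" using r by auto
      have gd: "((\<lambda>r. lm * r) has_real_derivative lm) (at r)" by (auto intro!: derivative_eq_intros)
      have "((\<lambda>r. \<psi> (lm * r)) has_real_derivative \<psi>' (lm * r) * lm) (at r)"
        using DERIV_chain2[OF conjunct1[OF d[OF lr]] gd] .
      from DERIV_cmult[OF this, of q]
      show "((\<lambda>r. q * \<psi> (lm * r)) has_real_derivative q * lm * \<psi>' (lm * r)) (at r)"
        by (simp add: ac_simps)
      have "((\<lambda>r. \<psi>' (lm * r)) has_real_derivative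
          (- c * \<psi> (lm * r) powr p - (real N - 1) / (lm * r) * \<psi>' (lm * r)) * lm) (at r)"
        using DERIV_chain2[OF conjunct2[OF d[OF lr]] gd] .
      from DERIV_cmult[OF this, of "q * lm"]
      have D2: "((\<lambda>r. q * lm * \<psi>' (lm * r)) has_real_derivative
          q * lm * ((- c * \<psi> (lm * r) powr p - (real N - 1) / (lm * r) * \<psi>' (lm * r)) * lm)) (at r)" .
      have "q * lm * ((- c * \<psi> (lm * r) powr p - (real N - 1) / (lm * r) * \<psi>' (lm * r)) * lm)
          = - c * (q * (lm * lm)) * \<psi> (lm * r) powr p - (real N - 1) / r * (q * lm * \<psi>' (lm * r))"
        using lam r0 by (simp add: field_simps)
      also have "\<dots> = - c * (q * \<psi> (lm * r)) powr p - (real N - 1) / r * (q * lm * \<psi>' (lm * r))"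
        unfolding lam2 by (simp add: powr_mult)
      finally show "((\<lambda>r. q * lm * \<psi>' (lm * r)) has_real_derivative
          (- c * (q * \<psi> (lm * r)) powr p - (real N - 1) / r * (q * lm * \<psi>' (lm * r)))) (at r)"
        using D2 by simp
    qed
  qed
  show "integral {0..R / lm} (\<lambda>s. (q * \<psi> (lm * s)) powr p * s ^ (N - 1))
          = q powr p / lm ^ N * integral {0..R} (\<lambda>s. \<psi> s powr p * s ^ (N - 1))"
  proof -
    define F where "F s = \<psi> s powr p * s ^ (N - 1)" for s
    define I where "I = integral {0..R} F"
    have Fc: "continuous_on {0..R} F" unfolding F_def by (rule LEg_mass_cont[OF l p])
    have hI: "(F has_integral I) (cbox 0 R)" unfolding I_def using integrable_continuous_interval[OF Fc] by auto
    have "((\<lambda>x. F (lm *\<^sub>R x + 0)) has_integral (1 / (\<bar>lm\<bar> ^ DIM(real))) *\<^sub>R I)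
        ((\<lambda>x. (1 / lm) *\<^sub>R x + - ((1 / lm) *\<^sub>R 0)) ` cbox 0 R)"
      by (rule has_integral_affinity[OF hI]) (use lam in auto)
    moreover have "(\<lambda>x. (1 / lm) *\<^sub>R x + - ((1 / lm) *\<^sub>R 0)) ` cbox 0 R = {0..R / lm}"
      using image_mult_atLeastAtMost[of "1 / lm" 0 R] lam by simp
    ultimately have h1: "((\<lambda>x. F (lm * x)) has_integral I / lm) {0..R / lm}" using lam by simp
    have h2: "((\<lambda>x. q powr p / lm ^ (N - 1) * F (lm * x)) has_integral q powr p / lm ^ (N - 1) * (I / lm)) {0..R / lm}"
      using has_integral_mult_right[OF h1] .
    have eqf: "q powr p / lm ^ (N - 1) * F (lm * x) = (q * \<psi> (lm * x)) powr p * x ^ (N - 1)" for x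
      unfolding F_def using lam by (simp add: powr_mult power_mult_distrib field_simps)
    have h3: "((\<lambda>s. (q * \<psi> (lm * s)) powr p * s ^ (N - 1)) has_integral q powr p / lm ^ (N - 1) * (I / lm)) {0..R / lm}"
      using h2 unfolding eqf .
    have "q powr p / lm ^ (N - 1) * (I / lm) = q powr p / lm ^ N * I"
    proof (cases N)
      case 0 then show ?thesis using N1 by simp
    next
      case (Suc n) then show ?thesis using lam by (simp add: field_simps)
    qed
    then show ?thesis using integral_unique[OF h3] unfolding I_def F_def by simp
  qed
qed



theorem mainTheorem4:
  fixes N :: nat and m M :: real
  assumes "N \<ge> 3" and "m > 2 - 2 / real N" and "M > 0"
  shows "\<exists>!\<alpha>. \<alpha> > 0 \<and> (\<exists>R \<psi>. LE_solution N m \<alpha> R \<psi> \<and>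
           sphere_area N * integral {0..R} (\<lambda>s. \<psi> s powr (1 / (m - 1)) * s ^ (N - 1)) = M)"
proof -
  note N = assms(1) and mN = assms(2) and M = assms(3)
  define c where "c = (m - 1) / m"
  define p where "p = 1 / (m - 1)"
  have LEeq: "LE_solution N m \<alpha> R \<psi> = LEg N c p \<alpha> R \<psi>" for \<alpha> R \<psi>
    unfolding LE_solution_def LEg_def c_def p_def by simp
  have N3: "3 \<le> real N" using N by simp
  have "2 / real N \<le> 2 / 3" using N3 by (intro divide_left_mono) auto
  then have m1: "1 < m" using mN by linarith
  have c: "0 < c" unfolding c_def using m1 by simp
  have p: "0 < p" unfolding p_def using m1 by simp
  have N2: "2 \<le> N" "1 \<le> N" using N by auto
  have Nm2: "0 < real N - 2" using N3 by simp
  have mm: "(real N - 2) / real N < m - 1"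
  proof -
    have "(real N - 2) / real N = 1 - 2 / real N" using N3 by (simp add: field_simps)
    then show ?thesis using mN by simp
  qed
  have pN: "p < real N / (real N - 2)"
  proof -
    have "0 < (real N - 2) / real N" using Nm2 N3 by simp
    then have b: "0 < (m - 1) * ((real N - 2) / real N)" using m1 by (intro mult_pos_pos) auto
    have "1 / (m - 1) < 1 / ((real N - 2) / real N)" by (rule divide_strict_left_mono[OF mm]) (use b in auto)
    then show ?thesis unfolding p_def by simp
  qed
  define e where "e = p - real N * (p - 1) / 2"
  have e: "0 < e"
  proof -
    have "p * (real N - 2) < real N" using pN Nm2 by (simp add: field_simps)
    then show ?thesis unfolding e_def by (simp add: algebra_simps)
  qed
  define \<omega> where "\<omega> = sphere_area N"
  have \<omega>: "0 < \<omega>" unfolding \<omega>_def sphere_area_def using N3 by (intro divide_pos_pos mult_pos_pos Gamma_real_pos) auto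
  obtain R0 \<psi>0 where l0: "LEg N c p 1 R0 \<psi>0" using exists_sol[OF N c p pN] by blast
  define I0 where "I0 = integral {0..R0} (\<lambda>s. \<psi>0 s powr p * s ^ (N - 1))"
  have I0: "0 < I0" unfolding I0_def by (rule LEg_mass_pos[OF l0 c N2(1) p])
  have massq: "integral {0..R} (\<lambda>s. \<psi> s powr p * s ^ (N - 1)) = q powr e * I0"
    if q: "0 < q" and l: "LEg N c p q R \<psi>" for q R \<psi>
  proof -
    define lm where "lm = q powr ((p - 1) / 2)"
    have lm: "0 < lm" unfolding lm_def using q by simp
    have ls: "LEg N c p (q * 1) (R0 / lm) (\<lambda>r. q * \<psi>0 (lm * r))"
      using LEg_scale(1)[OF l0 q p N2(2)] unfolding lm_def by simp
    have ms: "integral {0..R0 / lm} (\<lambda>s. (q * \<psi>0 (lm * s)) powr p * s ^ (N - 1)) = q powr p / lm ^ N * I0"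
      using LEg_scale(2)[OF l0 q p N2(2)] unfolding lm_def I0_def by simp
    have u: "R = R0 / lm \<and> (\<forall>r\<in>{0..R}. \<psi> r = q * \<psi>0 (lm * r))"
      using LEg_unique[OF l ls[simplified] c N2(1) p] .
    have "integral {0..R} (\<lambda>s. \<psi> s powr p * s ^ (N - 1)) = integral {0..R0 / lm} (\<lambda>s. (q * \<psi>0 (lm * s)) powr p * s ^ (N - 1))"
      using u by (auto intro: integral_cong)
    also have "\<dots> = q powr p / lm ^ N * I0" by (rule ms)
    also have "q powr p / lm ^ N = q powr e"
    proof -
      have "lm ^ N = q powr ((p - 1) / 2 * real N)"
        unfolding lm_def using q by (simp add: powr_realpow[symmetric] powr_powr)
      then show ?thesis unfolding e_def by (simp add: powr_diff[symmetric] algebra_simps)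
    qed
    finally show ?thesis .
  qed
  show ?thesis
  proof (rule ex_ex1I)
    define q where "q = (M / (\<omega> * I0)) powr (1 / e)"
    have q: "0 < q" unfolding q_def using M \<omega> I0 by simp
    have qe: "q powr e = M / (\<omega> * I0)" unfolding q_def using e M \<omega> I0 by (simp add: powr_powr)
    obtain R \<psi> where l: "LEg N c p q R \<psi>"
      using LEg_scale(1)[OF l0 q p N2(2)] by auto
    have "\<omega> * integral {0..R} (\<lambda>s. \<psi> s powr p * s ^ (N - 1)) = M"
      using massq[OF q l] qe \<omega> I0 by simp
    then show "\<exists>\<alpha>. \<alpha> > 0 \<and> (\<exists>R \<psi>. LE_solution N m \<alpha> R \<psi> \<and>
           sphere_area N * integral {0..R} (\<lambda>s. \<psi> s powr (1 / (m - 1)) * s ^ (N - 1)) = M)"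
      using q l unfolding LEeq \<omega>_def p_def by blast
  next
    fix a1 a2
    assume h1: "a1 > 0 \<and> (\<exists>R \<psi>. LE_solution N m a1 R \<psi> \<and>
           sphere_area N * integral {0..R} (\<lambda>s. \<psi> s powr (1 / (m - 1)) * s ^ (N - 1)) = M)"
      and h2: "a2 > 0 \<and> (\<exists>R \<psi>. LE_solution N m a2 R \<psi> \<and>
           sphere_area N * integral {0..R} (\<lambda>s. \<psi> s powr (1 / (m - 1)) * s ^ (N - 1)) = M)"
    obtain R1 \<psi>1 where l1: "LEg N c p a1 R1 \<psi>1" and M1: "\<omega> * integral {0..R1} (\<lambda>s. \<psi>1 s powr p * s ^ (N - 1)) = M"
      using h1 unfolding LEeq \<omega>_def p_def by blast
    obtain R2 \<psi>2 where l2: "LEg N c p a2 R2 \<psi>2" and M2: "\<omega> * integral {0..R2} (\<lambda>s. \<psi>2 s powr p * s ^ (N - 1)) = M"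
      using h2 unfolding LEeq \<omega>_def p_def by blast
    have "\<omega> * (a1 powr e * I0) = \<omega> * (a2 powr e * I0)"
      using M1 M2 massq[of a1 R1 \<psi>1] massq[of a2 R2 \<psi>2] l1 l2 h1 h2 by simp
    then have "a1 powr e = a2 powr e" using \<omega> I0 by simp
    then have "(a1 powr e) powr (1 / e) = (a2 powr e) powr (1 / e)" by simp
    then show "a1 = a2" using e h1 h2 by (simp add: powr_powr)
  qed
qed

end
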